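(* Let $\mathcal{X},\mathcal{Y}$ be finite, $|\mathcal{X}|\ge2$, $I_{\max}=\log_2\min(|\mathcal{X}|,|\mathcal{Y}|)$, $n\ge3$ an integer and $K\ge2I_{\max}$. Let $W_1,\dots,W_n$ be channels and partition $\{1,\dots,n\}$ into $B+1$ consecutive blocks of positive lengths $m_1,\dots,m_{B+1}$ ($\sum_i m_i=n$); let $\overline W_i$ be the average of the $W_t$ over block $i$ and $\overline W=\frac1n\sum_{t=1}^nW_t$. Let $\lambda^*=\left(K|\mathcal{X}|(|\mathcal{X}|-1)I_{\max}^{-1}\frac{\ln n}{n}\right)^{1/3}$, set $\lambda=\lambda^*$ if $\lambda^*<1$ (and let $\lambda\in(0,1)$ be arbitrary otherwise), let $\eta=\sqrt{\frac{|\mathcal{X}|-1}{K|\mathcal{X}|I_{\max}}\cdot\frac{\lambda\ln n}{n}}$, and let $\hat Q_1,\dots,\hat Q_{B+1}$ be defined by $$w_i(Q)=\frac{e^{\eta\sum_{j<i}m_jI(Q,\overline W_j)}}{\int_{\Delta_{\mathcal{X}}}e^{\eta\sum_{j<i}m_jI(\tilde Q,\overline W_j)}d\tilde Q},\qquad \hat Q_i=(1-\lambda)\int_{\Delta_{\mathcal{X}}}w_i(Q)Q\,dQ+\lambda U.$$ Suppose $m_i\,I(\hat Q_i,\overline W_i)\le K$ for every $i=1,\dots,B+1$. Then $$\frac{KB}{n}\ge C(\overline W)-4\,I_{\max}^{2/3}|\mathcal{X}|^{2/3}K^{1/3}\left(\frac{\ln n}{n}\right)^{1/3}.$$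
   Context: A channel is a conditional pmf $W(y|x)$; $I(Q,W)$ is the mutual information in bits of the joint law $Q(x)W(y|x)$ and $C(W)=\max_QI(Q,W)$. $U$ is the uniform distribution on $\mathcal{X}$, $\Delta_{\mathcal{X}}$ the probability simplex with $(|\mathcal{X}|-1)$-dimensional Lebesgue measure. The average of channels is taken entrywise: $\overline W_i(y|x)=\frac1{m_i}\sum_{t\in\text{block }i}W_t(y|x)$. *)

theory Defs
  imports "HOL-Analysis.Analysis"
begin

definition is_pmf :: "('x::finite \<Rightarrow> real) \<Rightarrow> bool" where
  "is_pmf Q \<longleftrightarrow> (\<forall>x. Q x \<ge> 0) \<and> (\<Sum>x\<in>UNIV. Q x) = 1"

definition prob_simplex :: "('x::finite \<Rightarrow> real) set" where
  "prob_simplex = {Q. is_pmf Q}"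

definition is_channel :: "('x::finite \<Rightarrow> 'y::finite \<Rightarrow> real) \<Rightarrow> bool" where
  "is_channel W \<longleftrightarrow> (\<forall>x. is_pmf (W x))"

definition out_dist :: "('x::finite \<Rightarrow> real) \<Rightarrow> ('x \<Rightarrow> 'y \<Rightarrow> real) \<Rightarrow> 'y \<Rightarrow> real" where
  "out_dist Q W y = (\<Sum>x\<in>UNIV. Q x * W x y)"

definition mutual_info :: "('x::finite \<Rightarrow> real) \<Rightarrow> ('x \<Rightarrow> 'y::finite \<Rightarrow> real) \<Rightarrow> real" where
  "mutual_info Q W =
     (\<Sum>x\<in>UNIV. \<Sum>y\<in>UNIV.
        if Q x * W x y > 0 then Q x * W x y * log 2 (W x y / out_dist Q W y) else 0)"

definition capacity :: "('x::finite \<Rightarrow> 'y::finite \<Rightarrow> real) \<Rightarrow> real" where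
  "capacity W = (SUP Q\<in>prob_simplex. mutual_info Q W)"

definition unif :: "'x::finite \<Rightarrow> real" where
  "unif x = 1 / real CARD('x)"

text \<open>Integration over the probability simplex w.r.t. (|X|-1)-dimensional Lebesgue
  measure: the simplex is parametrised by the coordinates other than a fixed
  element x0 (the remaining coordinate being 1 minus their sum).\<close>

definition x0 :: "'x" where "x0 = (SOME x. True)"

definition simplex_ext :: "('x \<Rightarrow> real) \<Rightarrow> ('x::finite \<Rightarrow> real)" where
  "simplex_ext q = (\<lambda>x. if x = x0 then 1 - (\<Sum>x'\<in>UNIV - {x0}. q x') else q x)"

definition simplex_param :: "('x::finite \<Rightarrow> real) set" where
  "simplex_param = {q \<in> space (PiM (UNIV - {x0}) (\<lambda>_. lborel)).
       (\<forall>x\<in>UNIV - {x0}. q x \<ge> 0) \<and> (\<Sum>x\<in>UNIV - {x0}. q x) \<le> 1}"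

definition simplex_integral :: "(('x::finite \<Rightarrow> real) \<Rightarrow> real) \<Rightarrow> real" where
  "simplex_integral f =
     set_lebesgue_integral (PiM (UNIV - {x0}) (\<lambda>_. lborel)) simplex_param
       (\<lambda>q. f (simplex_ext q))"

text \<open>Blocks: block i (for 1 \<le> i) consists of the indices s_i+1, ..., s_i+m_i
  where s_i = m_1 + ... + m_(i-1).\<close>

definition block :: "(nat \<Rightarrow> nat) \<Rightarrow> nat \<Rightarrow> nat set" where
  "block m i = {(\<Sum>j\<in>{1..<i}. m j) + 1 .. (\<Sum>j\<in>{1..<i}. m j) + m i}"

definition block_avg ::
  "(nat \<Rightarrow> 'x \<Rightarrow> 'y \<Rightarrow> real) \<Rightarrow> (nat \<Rightarrow> nat) \<Rightarrow> nat \<Rightarrow> 'x \<Rightarrow> 'y \<Rightarrow> real" where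
  "block_avg W m i = (\<lambda>x y. (1 / real (m i)) * (\<Sum>t\<in>block m i. W t x y))"

definition total_avg :: "(nat \<Rightarrow> 'x \<Rightarrow> 'y \<Rightarrow> real) \<Rightarrow> nat \<Rightarrow> 'x \<Rightarrow> 'y \<Rightarrow> real" where
  "total_avg W n = (\<lambda>x y. (1 / real n) * (\<Sum>t\<in>{1..n}. W t x y))"

definition potential ::
  "real \<Rightarrow> (nat \<Rightarrow> 'x::finite \<Rightarrow> 'y::finite \<Rightarrow> real) \<Rightarrow> (nat \<Rightarrow> nat) \<Rightarrow> nat \<Rightarrow> ('x \<Rightarrow> real) \<Rightarrow> real" where
  "potential \<eta> W m i Q = \<eta> * (\<Sum>j\<in>{1..<i}. real (m j) * mutual_info Q (block_avg W m j))"

definition Qhat ::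
  "real \<Rightarrow> real \<Rightarrow> (nat \<Rightarrow> 'x::finite \<Rightarrow> 'y::finite \<Rightarrow> real) \<Rightarrow> (nat \<Rightarrow> nat) \<Rightarrow> nat \<Rightarrow> 'x \<Rightarrow> real" where
  "Qhat lam \<eta> W m i = (\<lambda>x.
     (1 - lam) * (simplex_integral (\<lambda>Q. exp (potential \<eta> W m i Q) * Q x)
                / simplex_integral (\<lambda>Q. exp (potential \<eta> W m i Q)))
     + lam * unif x)"

end

theory Submission
  imports Defs
begin


lemma gibbs:
  fixes p r :: "'a \<Rightarrow> real"
  assumes "finite A" "\<And>y. y \<in> A \<Longrightarrow> p y \<ge> 0" "sum p A = 1"
    "\<And>y. y \<in> A \<Longrightarrow> r y \<ge> 0" "sum r A \<le> 1"
    "\<And>y. y \<in> A \<Longrightarrow> p y > 0 \<Longrightarrow> r y > 0"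
  shows "0 \<le> (\<Sum>y\<in>A. if p y > 0 then p y * log 2 (p y / r y) else 0)"
proof -
  have t: "(p y - r y) / ln 2 \<le> (if p y > 0 then p y * log 2 (p y / r y) else 0)" if y: "y \<in> A" for y
  proof (cases "p y > 0")
    case True
    have r: "r y > 0" using assms(6) y True by auto
    have "ln (r y / p y) \<le> r y / p y - 1" using r True by (intro ln_le_minus_one) auto
    hence "- ln (p y / r y) \<le> r y / p y - 1" using r True by (simp add: ln_div)
    hence "p y * (- ln (p y / r y)) \<le> p y * (r y / p y - 1)" using True by (intro mult_left_mono) auto
    also have "p y * (r y / p y - 1) = r y - p y" using True by (simp add: field_simps)
    finally have "r y - p y \<ge> - p y * ln (p y / r y)" by simp
    hence "(p y - r y) / ln 2 \<le> p y * ln (p y / r y) / ln 2" by (intro divide_right_mono) auto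
    thus ?thesis using True by (simp add: log_def)
  next
    case False thus ?thesis using assms(4)[OF y] by (simp add: divide_nonpos_nonneg)
  qed
  have "0 \<le> (\<Sum>y\<in>A. (p y - r y) / ln 2)"
    using assms(3,5) by (simp add: sum_divide_distrib[symmetric] sum_subtractf)
  also have "\<dots> \<le> (\<Sum>y\<in>A. if p y > 0 then p y * log 2 (p y / r y) else 0)" by (intro sum_mono t)
  finally show ?thesis .
qed

definition Dv :: "('x::finite \<Rightarrow> 'y::finite \<Rightarrow> real) \<Rightarrow> 'x \<Rightarrow> ('y \<Rightarrow> real) \<Rightarrow> real" where
  "Dv W x R = (\<Sum>y\<in>UNIV. if W x y > 0 then W x y * log 2 (W x y / R y) else 0)"

definition Fq :: "('x::finite \<Rightarrow> real) \<Rightarrow> ('x \<Rightarrow> 'y::finite \<Rightarrow> real) \<Rightarrow> ('y \<Rightarrow> real) \<Rightarrow> real" where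
  "Fq Q W R = (\<Sum>x\<in>UNIV. \<Sum>y\<in>UNIV.
        if Q x * W x y > 0 then Q x * W x y * log 2 (W x y / R y) else 0)"

lemma mi_Fq: "mutual_info Q W = Fq Q W (out_dist Q W)"
  by (simp add: mutual_info_def Fq_def)

lemma Fq_Dv:
  assumes "\<And>x. Q x \<ge> 0"
  shows "Fq Q W R = (\<Sum>x\<in>UNIV. Q x * Dv W x R)"
  unfolding Fq_def Dv_def
proof (intro sum.cong refl)
  fix x
  show "(\<Sum>y\<in>UNIV. if Q x * W x y > 0 then Q x * W x y * log 2 (W x y / R y) else 0) =
        Q x * (\<Sum>y\<in>UNIV. if W x y > 0 then W x y * log 2 (W x y / R y) else 0)"
  proof (cases "Q x > 0")
    case True
    then show ?thesis unfolding sum_distrib_left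
      by (intro sum.cong) (auto simp: zero_less_mult_iff mult.assoc)
  next
    case False
    then have "Q x = 0" using assms[of x] by auto
    then show ?thesis by simp
  qed
qed

lemma pmf_nonneg: "is_pmf Q \<Longrightarrow> Q x \<ge> 0" by (simp add: is_pmf_def)
lemma pmf_sum: "is_pmf Q \<Longrightarrow> (\<Sum>x\<in>UNIV. Q x) = 1" by (simp add: is_pmf_def)
lemma pmf_le1: "is_pmf Q \<Longrightarrow> Q x \<le> 1"
proof -
  assume q: "is_pmf Q"
  have "Q x \<le> (\<Sum>x\<in>UNIV. Q x)"
    by (rule member_le_sum) (auto simp: pmf_nonneg[OF q])
  thus ?thesis using pmf_sum[OF q] by simp
qed

lemma out_nonneg: "is_pmf Q \<Longrightarrow> is_channel W \<Longrightarrow> out_dist Q W y \<ge> 0"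
  unfolding out_dist_def is_channel_def
  by (intro sum_nonneg mult_nonneg_nonneg) (auto simp: pmf_nonneg)

lemma out_ge: "is_pmf Q \<Longrightarrow> is_channel W \<Longrightarrow> Q x * W x y \<le> out_dist Q W y"
  unfolding out_dist_def is_channel_def
  by (rule member_le_sum[where f="\<lambda>x. Q x * W x y"]) (auto simp: pmf_nonneg)

lemma out_pmf: "is_pmf Q \<Longrightarrow> is_channel W \<Longrightarrow> is_pmf (out_dist Q W)"
proof -
  assume q: "is_pmf Q" and w: "is_channel W"
  have "(\<Sum>y\<in>UNIV. out_dist Q W y) = (\<Sum>x\<in>UNIV. Q x * (\<Sum>y\<in>UNIV. W x y))"
    unfolding out_dist_def by (subst sum.swap) (simp add: sum_distrib_left)
  also have "\<dots> = 1" using w q by (simp add: is_channel_def pmf_sum)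
  finally show ?thesis using out_nonneg[OF q w] by (simp add: is_pmf_def)
qed

lemma key:
  assumes q: "is_pmf Q" and w: "is_channel W"
    and r: "\<And>y. R y \<ge> 0" "(\<Sum>y\<in>UNIV. R y) \<le> 1"
    and supp: "\<And>x y. Q x * W x y > 0 \<Longrightarrow> R y > 0"
  shows "mutual_info Q W \<le> Fq Q W R"
proof -
  define Ot where "Ot = out_dist Q W"
  have Opos: "Ot y > 0" if "Q x * W x y > 0" for x y
    using out_ge[OF q w, of x y] that by (simp add: Ot_def)
  have QW: "Q x * W x y \<ge> 0" for x y
    using q w by (simp add: pmf_nonneg is_channel_def)
  have "Fq Q W R - mutual_info Q W =
      (\<Sum>x\<in>UNIV. \<Sum>y\<in>UNIV. Q x * W x y * log 2 (Ot y / R y))"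
    unfolding mi_Fq Fq_def Ot_def[symmetric] sum_subtractf[symmetric]
  proof (intro sum.cong refl)
    fix x y
    show "(if Q x * W x y > 0 then Q x * W x y * log 2 (W x y / R y) else 0) -
          (if Q x * W x y > 0 then Q x * W x y * log 2 (W x y / Ot y) else 0) =
          Q x * W x y * log 2 (Ot y / R y)"
    proof (cases "Q x * W x y > 0")
      case True
      have "R y > 0" "Ot y > 0" using supp[OF True] Opos[OF True] by auto
      moreover have "W x y > 0" "Q x > 0" using True pmf_nonneg[OF q, of x]
        by (auto simp: zero_less_mult_iff)
      ultimately show ?thesis using True
        by (simp add: log_divide algebra_simps)
    next
      case False
      then have "Q x * W x y = 0" using QW[of x y] by auto
      then show ?thesis using False by (simp del: mult_eq_0_iff)
    qed
  qed
  also have "\<dots> = (\<Sum>y\<in>UNIV. Ot y * log 2 (Ot y / R y))"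
    by (subst sum.swap) (simp add: Ot_def out_dist_def sum_distrib_right)
  also have "\<dots> = (\<Sum>y\<in>UNIV. if Ot y > 0 then Ot y * log 2 (Ot y / R y) else 0)"
    using out_nonneg[OF q w] by (intro sum.cong) (auto simp: Ot_def less_eq_real_def)
  also have "\<dots> \<ge> 0"
  proof (rule gibbs)
    show "sum Ot UNIV = 1" using out_pmf[OF q w] by (simp add: Ot_def is_pmf_def)
    show "Ot y \<ge> 0" for y using out_nonneg[OF q w] by (simp add: Ot_def)
    show "R y > 0" if "Ot y > 0" for y
    proof -
      have "\<exists>x\<in>UNIV. Q x * W x y > 0"
      proof (rule ccontr)
        assume "\<not> ?thesis"
        then have le: "Q x * W x y \<le> 0" for x by (simp add: not_less)
        have "Ot y \<le> 0" unfolding Ot_def out_dist_def by (intro sum_nonpos le)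
        with that show False by simp
      qed
      then show ?thesis using supp by auto
    qed
  qed (use r in auto)
  finally show ?thesis by simp
qed

lemma Dv_nonneg:
  assumes "is_pmf (W x)" "\<And>y. R y \<ge> 0" "(\<Sum>y\<in>UNIV. R y) \<le> 1"
    "\<And>y. W x y > 0 \<Longrightarrow> R y > 0"
  shows "Dv W x R \<ge> 0"
  unfolding Dv_def
  by (rule gibbs[where p="W x"]) (use assms in \<open>auto simp: is_pmf_def\<close>)

lemma mi_nonneg:
  assumes q: "is_pmf Q" and w: "is_channel W"
  shows "mutual_info Q W \<ge> 0"
proof -
  have "mutual_info Q W = (\<Sum>x\<in>UNIV. Q x * Dv W x (out_dist Q W))"
    by (simp add: mi_Fq Fq_Dv pmf_nonneg[OF q])
  also have "\<dots> \<ge> 0"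
  proof (intro sum_nonneg)
    fix x
    show "0 \<le> Q x * Dv W x (out_dist Q W)"
    proof (cases "Q x > 0")
      case True
      have "Dv W x (out_dist Q W) \<ge> 0"
      proof (rule Dv_nonneg)
        show "is_pmf (W x)" using w by (simp add: is_channel_def)
        show "out_dist Q W y \<ge> 0" for y by (rule out_nonneg[OF q w])
        show "(\<Sum>y\<in>UNIV. out_dist Q W y) \<le> 1" using out_pmf[OF q w] by (simp add: is_pmf_def)
        show "out_dist Q W y > 0" if "W x y > 0" for y
          using out_ge[OF q w, of x y] True that by (smt (verit) mult_pos_pos)
      qed
      then show ?thesis using True by simp
    next
      case False
      then show ?thesis using pmf_nonneg[OF q, of x] by simp
    qed
  qed
  finally show ?thesis .
qed

lemma mi_le_Y:
  assumes q: "is_pmf Q" and w: "is_channel (W::'x::finite \<Rightarrow> 'y::finite \<Rightarrow> real)"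
  shows "mutual_info Q W \<le> log 2 (real CARD('y))"
proof -
  define c where "c = real CARD('y)"
  have c: "c \<ge> 1" by (simp add: c_def Suc_le_eq card_gt_0_iff)
  define R where "R = (\<lambda>y::'y. 1 / c)"
  have "mutual_info Q W \<le> Fq Q W R"
  proof (rule key[OF q w])
    show "R y \<ge> 0" for y using c by (simp add: R_def)
    show "(\<Sum>y\<in>UNIV. R y) \<le> 1" using c by (simp add: R_def c_def)
    show "R y > 0" for y using c by (simp add: R_def)
  qed
  also have "\<dots> = (\<Sum>x\<in>UNIV. Q x * Dv W x R)" by (simp add: Fq_Dv pmf_nonneg[OF q])
  also have "\<dots> \<le> (\<Sum>x\<in>UNIV. Q x * log 2 c)"
  proof (intro sum_mono mult_left_mono)
    fix x
    have wx: "is_pmf (W x)" using w by (simp add: is_channel_def)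
    have "Dv W x R \<le> (\<Sum>y\<in>UNIV. W x y * log 2 c)"
      unfolding Dv_def
    proof (intro sum_mono)
      fix y
      show "(if W x y > 0 then W x y * log 2 (W x y / R y) else 0) \<le> W x y * log 2 c"
      proof (cases "W x y > 0")
        case True
        have "log 2 (W x y) \<le> 0" using True pmf_le1[OF wx, of y] by simp
        moreover have "log 2 (W x y / R y) = log 2 (W x y) + log 2 c"
          using True c by (simp add: R_def log_mult)
        moreover have "W x y * log 2 (W x y) \<le> 0" using True \<open>log 2 (W x y) \<le> 0\<close>
          by (simp add: mult_nonneg_nonpos)
        ultimately show ?thesis using True by (simp add: algebra_simps)
      next
        case False
        then have "W x y = 0" using pmf_nonneg[OF wx, of y] by simp
        then show ?thesis by simp
      qed
    qed
    also have "\<dots> = log 2 c" using pmf_sum[OF wx] by (simp add: sum_distrib_right[symmetric])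
    finally show "Dv W x R \<le> log 2 c" .
  qed (simp add: pmf_nonneg[OF q])
  also have "\<dots> = log 2 c" using pmf_sum[OF q] by (simp add: sum_distrib_right[symmetric])
  finally show ?thesis by (simp add: c_def)
qed

lemma entropy_le:
  assumes q: "is_pmf (Q::'x::finite \<Rightarrow> real)"
  shows "(\<Sum>x\<in>UNIV. if Q x > 0 then - Q x * log 2 (Q x) else 0) \<le> log 2 (real CARD('x))"
proof -
  define c where "c = real CARD('x)"
  have c: "c \<ge> 1" by (simp add: c_def Suc_le_eq card_gt_0_iff)
  have "0 \<le> (\<Sum>x\<in>UNIV. if Q x > 0 then Q x * log 2 (Q x / (1/c)) else 0)"
    by (rule gibbs) (use q c in \<open>auto simp: is_pmf_def c_def\<close>)
  also have "\<dots> = (\<Sum>x\<in>UNIV. (if Q x > 0 then Q x * log 2 (Q x) else 0) + Q x * log 2 c)"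
  proof (intro sum.cong refl)
    fix x show "(if Q x > 0 then Q x * log 2 (Q x / (1/c)) else 0) =
      (if Q x > 0 then Q x * log 2 (Q x) else 0) + Q x * log 2 c"
      using c pmf_nonneg[OF q, of x] by (auto simp: log_mult algebra_simps)
  qed
  also have "\<dots> = (\<Sum>x\<in>UNIV. (if Q x > 0 then Q x * log 2 (Q x) else 0)) + log 2 c"
    using pmf_sum[OF q] by (simp add: sum.distrib sum_distrib_right[symmetric])
  moreover have "(\<Sum>x\<in>UNIV. if Q x > 0 then - Q x * log 2 (Q x) else 0) =
     - (\<Sum>x\<in>UNIV. if Q x > 0 then Q x * log 2 (Q x) else 0)"
    by (simp add: sum_negf[symmetric] if_distrib cong: if_cong)
  ultimately show ?thesis by (simp add: c_def)
qed

lemma mi_le_X: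
  assumes q: "is_pmf Q" and w: "is_channel (W::'x::finite \<Rightarrow> 'y::finite \<Rightarrow> real)"
  shows "mutual_info Q W \<le> log 2 (real CARD('x))"
proof -
  have "mutual_info Q W \<le> (\<Sum>x\<in>UNIV. \<Sum>y\<in>UNIV. if Q x > 0 then - Q x * log 2 (Q x) * W x y else 0)"
    unfolding mutual_info_def
  proof (intro sum_mono)
    fix x y
    show "(if Q x * W x y > 0 then Q x * W x y * log 2 (W x y / out_dist Q W y) else 0)
        \<le> (if Q x > 0 then - Q x * log 2 (Q x) * W x y else 0)"
    proof (cases "Q x * W x y > 0")
      case True
      have qx: "Q x > 0" and wxy: "W x y > 0" using True pmf_nonneg[OF q, of x]
        by (auto simp: zero_less_mult_iff)
      have o: "out_dist Q W y \<ge> Q x * W x y" by (rule out_ge[OF q w])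
      have op: "out_dist Q W y > 0" using o True by linarith
      have "W x y / out_dist Q W y \<le> W x y / (Q x * W x y)"
        using o True wxy by (intro divide_left_mono) auto
      also have "\<dots> = 1 / Q x" using wxy by simp
      finally have "log 2 (W x y / out_dist Q W y) \<le> log 2 (1 / Q x)"
        using op wxy qx by (subst log_le_cancel_iff) (auto intro!: divide_pos_pos)
      also have "\<dots> = - log 2 (Q x)" using qx by (simp add: log_divide)
      finally have "Q x * W x y * log 2 (W x y / out_dist Q W y) \<le> Q x * W x y * (- log 2 (Q x))"
        using True by (intro mult_left_mono) auto
      then show ?thesis using qx True by (simp add: algebra_simps)
    next
      case False
      have "Q x * W x y \<ge> 0" using q w by (simp add: pmf_nonneg is_channel_def)
      have "W x y \<ge> 0" using w by (simp add: pmf_nonneg is_channel_def)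
      have "- Q x * log 2 (Q x) \<ge> 0" if "Q x > 0"
        using that pmf_le1[OF q, of x] by (simp add: mult_nonneg_nonpos)
      then show ?thesis using False \<open>W x y \<ge> 0\<close> by (auto intro: mult_nonneg_nonneg mult_nonpos_nonneg)
    qed
  qed
  also have "\<dots> = (\<Sum>x\<in>UNIV. if Q x > 0 then - Q x * log 2 (Q x) else 0)"
  proof (intro sum.cong refl)
    fix x
    have "is_pmf (W x)" using w by (simp add: is_channel_def)
    then show "(\<Sum>y\<in>UNIV. if Q x > 0 then - Q x * log 2 (Q x) * W x y else 0) =
          (if Q x > 0 then - Q x * log 2 (Q x) else 0)"
    proof (cases "Q x > 0")
      case True
      have "(\<Sum>y\<in>UNIV. - Q x * log 2 (Q x) * W x y) = - Q x * log 2 (Q x) * (\<Sum>y\<in>UNIV. W x y)"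
        by (simp add: sum_distrib_left)
      then show ?thesis using True pmf_sum[OF \<open>is_pmf (W x)\<close>] by simp
    qed simp
  qed
  also have "\<dots> \<le> log 2 (real CARD('x))" by (rule entropy_le[OF q])
  finally show ?thesis .
qed

lemma mi_le_min:
  assumes q: "is_pmf Q" and w: "is_channel (W::'x::finite \<Rightarrow> 'y::finite \<Rightarrow> real)"
  shows "mutual_info Q W \<le> log 2 (real (min CARD('x) CARD('y)))"
  using mi_le_X[OF q w] mi_le_Y[OF q w]
  by (cases "CARD('x) \<le> CARD('y)") (auto simp: min_def)


lemma logsum:
  fixes a b :: "'a \<Rightarrow> real"
  assumes A: "finite A" and ab: "\<And>j. j \<in> A \<Longrightarrow> a j \<ge> 0" "\<And>j. j \<in> A \<Longrightarrow> b j \<ge> 0"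
    "\<And>j. j \<in> A \<Longrightarrow> a j > 0 \<Longrightarrow> b j > 0"
  shows "(if sum a A > 0 then sum a A * log 2 (sum a A / sum b A) else 0)
     \<le> (\<Sum>j\<in>A. if a j > 0 then a j * log 2 (a j / b j) else 0)" (is "?L \<le> ?R")
proof (cases "sum a A > 0")
  case False
  have "a j \<le> sum a A" if "j \<in> A" for j using A ab that by (intro member_le_sum) auto
  then have "?R = 0" using False by (intro sum.neutral) force
  then show ?thesis using False by simp
next
  case True
  define SA where "SA = sum a A"
  define SB where "SB = sum b A"
  obtain j where j: "j \<in> A" "a j > 0" using True
    by (metis less_numeral_extra(3) not_less sum_nonpos)
  have "b j \<le> SB" unfolding SB_def using A ab j by (intro member_le_sum) auto
  then have SB: "SB > 0" using ab(3) j by (meson less_le_trans)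
  have SA: "SA > 0" using True by (simp add: SA_def)
  have "0 \<le> (\<Sum>j\<in>A. if a j / SA > 0 then a j / SA * log 2 ((a j / SA) / (b j / SB)) else 0)"
  proof (rule gibbs[OF A])
    show "sum (\<lambda>j. a j / SA) A = 1" using SA by (simp add: SA_def sum_divide_distrib[symmetric])
    show "sum (\<lambda>j. b j / SB) A \<le> 1" using SB by (simp add: SB_def sum_divide_distrib[symmetric])
  qed (use ab SA SB in \<open>auto simp: zero_less_divide_iff\<close>)
  also have "\<dots> = (\<Sum>j\<in>A. (if a j > 0 then a j * log 2 (a j / b j) else 0) / SA + (a j / SA) * log 2 (SB / SA))"
  proof (intro sum.cong refl)
    fix i assume i: "i \<in> A"
    show "(if a i / SA > 0 then a i / SA * log 2 ((a i / SA) / (b i / SB)) else 0) =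
       (if a i > 0 then a i * log 2 (a i / b i) else 0) / SA + (a i / SA) * log 2 (SB / SA)"
    proof (cases "a i > 0")
      case True
      have bi: "b i > 0" using ab(3)[OF i True] .
      have eq: "(a i / SA) / (b i / SB) = (a i / b i) * (SB / SA)" by (simp add: field_simps)
      have "log 2 ((a i / b i) * (SB / SA)) = log 2 (a i / b i) + log 2 (SB / SA)"
        using True bi SA SB by (subst log_mult) auto
      then have "log 2 ((a i / SA) / (b i / SB)) = log 2 (a i / b i) + log 2 (SB / SA)"
        by (simp only: eq)
      then show ?thesis using True SA by (simp add: field_simps)
    next
      case False
      then have "a i = 0" using ab(1)[OF i] by simp
      then show ?thesis by simp
    qed
  qed
  also have "\<dots> = ?R / SA + log 2 (SB / SA)"
    using SA by (simp add: sum.distrib sum_divide_distrib[symmetric] sum_distrib_right[symmetric] SA_def)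
  finally have "- log 2 (SB / SA) * SA \<le> ?R" using SA by (simp add: field_simps)
  moreover have "- log 2 (SB / SA) = log 2 (SA / SB)" using SA SB by (simp add: log_divide)
  ultimately have "log 2 (SA / SB) * SA \<le> ?R" by (metis minus_mult_left)
  then show ?thesis using True by (simp add: SA_def SB_def mult.commute)
qed

lemma out_mix:
  assumes "finite A"
  shows "out_dist Q (\<lambda>x y. \<Sum>j\<in>A. \<alpha> j * V j x y) y = (\<Sum>j\<in>A. \<alpha> j * out_dist Q (V j) y)"
  unfolding out_dist_def sum_distrib_left by (subst sum.swap) (simp add: mult_ac)

lemma mi_convex:
  assumes q: "is_pmf Q" and A: "finite A" and V: "\<And>j. j \<in> A \<Longrightarrow> is_channel (V j)"
    and al: "\<And>j. j \<in> A \<Longrightarrow> \<alpha> j \<ge> 0"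
  shows "mutual_info Q (\<lambda>x y. \<Sum>j\<in>A. \<alpha> j * V j x y) \<le> (\<Sum>j\<in>A. \<alpha> j * mutual_info Q (V j))"
proof -
  define Wb where "Wb = (\<lambda>x y. \<Sum>j\<in>A. \<alpha> j * V j x y)"
  define T where "T = (\<lambda>j x y. if Q x * V j x y > 0 then Q x * V j x y * log 2 (V j x y / out_dist Q (V j) y) else 0)"
  have "mutual_info Q Wb \<le> (\<Sum>x\<in>UNIV. \<Sum>y\<in>UNIV. \<Sum>j\<in>A. \<alpha> j * T j x y)"
    unfolding mutual_info_def
  proof (intro sum_mono)
    fix x y
    have Vn: "V j x y \<ge> 0" if "j \<in> A" for j using V[OF that] by (simp add: is_channel_def pmf_nonneg)
    have L: "(if (\<Sum>j\<in>A. \<alpha> j * (Q x * V j x y)) > 0 then (\<Sum>j\<in>A. \<alpha> j * (Q x * V j x y)) *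
        log 2 ((\<Sum>j\<in>A. \<alpha> j * (Q x * V j x y)) / (\<Sum>j\<in>A. \<alpha> j * (Q x * out_dist Q (V j) y))) else 0)
      \<le> (\<Sum>j\<in>A. if \<alpha> j * (Q x * V j x y) > 0 then \<alpha> j * (Q x * V j x y) *
            log 2 (\<alpha> j * (Q x * V j x y) / (\<alpha> j * (Q x * out_dist Q (V j) y))) else 0)"
    proof (rule logsum[OF A])
      fix j assume j: "j \<in> A"
      show "0 \<le> \<alpha> j * (Q x * V j x y)" using al[OF j] Vn[OF j] pmf_nonneg[OF q, of x] by simp
      show "0 \<le> \<alpha> j * (Q x * out_dist Q (V j) y)"
        using al[OF j] out_nonneg[OF q V[OF j]] pmf_nonneg[OF q, of x] by simp
      assume pos: "0 < \<alpha> j * (Q x * V j x y)"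
      then have "\<alpha> j > 0" "Q x > 0" "V j x y > 0"
        using al[OF j] Vn[OF j] pmf_nonneg[OF q, of x] by (auto simp: zero_less_mult_iff)
      moreover have "out_dist Q (V j) y > 0"
        using out_ge[OF q V[OF j], of x y] calculation by (smt (verit) mult_pos_pos)
      ultimately show "0 < \<alpha> j * (Q x * out_dist Q (V j) y)" by simp
    qed
    have e1: "(\<Sum>j\<in>A. \<alpha> j * (Q x * V j x y)) = Q x * Wb x y"
      by (simp add: Wb_def sum_distrib_left mult_ac)
    have e2: "(\<Sum>j\<in>A. \<alpha> j * (Q x * out_dist Q (V j) y)) = Q x * out_dist Q Wb y"
      by (simp add: Wb_def out_mix[OF A] sum_distrib_left mult_ac)
    have e3: "(if \<alpha> j * (Q x * V j x y) > 0 then \<alpha> j * (Q x * V j x y) *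
            log 2 (\<alpha> j * (Q x * V j x y) / (\<alpha> j * (Q x * out_dist Q (V j) y))) else 0)
         = \<alpha> j * T j x y" if j: "j \<in> A" for j
    proof (cases "\<alpha> j * (Q x * V j x y) > 0")
      case True
      then have "\<alpha> j > 0" "Q x * V j x y > 0"
        using al[OF j] Vn[OF j] pmf_nonneg[OF q, of x] by (auto simp: zero_less_mult_iff)
      moreover have "Q x > 0" using calculation(2) pmf_nonneg[OF q, of x] Vn[OF j]
        by (auto simp: zero_less_mult_iff)
      moreover have "\<alpha> j * (Q x * V j x y) / (\<alpha> j * (Q x * out_dist Q (V j) y)) = V j x y / out_dist Q (V j) y"
        using calculation by simp
      ultimately show ?thesis using True by (simp add: T_def)
    next
      case False
      then have "\<alpha> j = 0 \<or> Q x * V j x y = 0"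
        using al[OF j] Vn[OF j] pmf_nonneg[OF q, of x] by (auto simp: zero_less_mult_iff less_eq_real_def)
      then show ?thesis using False by (auto simp: T_def)
    qed
    have e4: "(if Q x * Wb x y > 0 then Q x * Wb x y * log 2 (Q x * Wb x y / (Q x * out_dist Q Wb y)) else 0)
       = (if Q x * Wb x y > 0 then Q x * Wb x y * log 2 (Wb x y / out_dist Q Wb y) else 0)"
      by (cases "Q x = 0") auto
    show "(if Q x * Wb x y > 0 then Q x * Wb x y * log 2 (Wb x y / out_dist Q Wb y) else 0)
        \<le> (\<Sum>j\<in>A. \<alpha> j * T j x y)"
      using L unfolding e1 e2 e4 using sum.cong[OF refl e3, of A] by simp
  qed
  also have "\<dots> = (\<Sum>x\<in>UNIV. \<Sum>j\<in>A. \<Sum>y\<in>UNIV. \<alpha> j * T j x y)"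
    by (intro sum.cong refl) (rule sum.swap)
  also have "\<dots> = (\<Sum>j\<in>A. \<Sum>x\<in>UNIV. \<Sum>y\<in>UNIV. \<alpha> j * T j x y)"
    by (rule sum.swap)
  also have "\<dots> = (\<Sum>j\<in>A. \<alpha> j * (\<Sum>x\<in>UNIV. \<Sum>y\<in>UNIV. T j x y))"
    by (simp add: sum_distrib_left)
  also have "\<dots> = (\<Sum>j\<in>A. \<alpha> j * mutual_info Q (V j))"
    by (simp add: mutual_info_def T_def)
  finally show ?thesis by (simp add: Wb_def)
qed


lemma meas_ext[measurable]:
  "(\<lambda>q. simplex_ext q x) \<in> borel_measurable (PiM (UNIV - {x0}) (\<lambda>_. lborel))"
  by (cases "x = x0") (simp_all add: simplex_ext_def)

lemma mi_meas[measurable]: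
  "(\<lambda>q. mutual_info (simplex_ext q) V) \<in> borel_measurable (PiM (UNIV - {x0}) (\<lambda>_. lborel))"
  unfolding mutual_info_def out_dist_def by measurable

lemma S_sets[measurable]: "simplex_param \<in> sets (PiM (UNIV - {x0}) (\<lambda>_. lborel))"
proof -
  have "simplex_param = {q \<in> space (PiM (UNIV - {x0}) (\<lambda>_. lborel)).
       (\<forall>x\<in>UNIV - {x0}. q x \<ge> 0) \<and> (\<Sum>x\<in>UNIV - {x0}. q x) \<le> 1}" by (simp add: simplex_param_def)
  also have "\<dots> \<in> sets (PiM (UNIV - {x0}) (\<lambda>_. lborel))" by measurable
  finally show ?thesis .
qed

lemma shifted_simplex_step:
  fixes x a :: "'a \<Rightarrow> real" and y t :: real
  assumes "b \<notin> A" "finite A"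
  shows "x(b := y) \<in> {x. (\<forall>i\<in>insert b A. a i \<le> x i) \<and> (\<Sum>i\<in>insert b A. x i - a i) \<le> t} \<longleftrightarrow>
     y \<in> {a b..a b + t} \<and> x \<in> {x. (\<forall>i\<in>A. a i \<le> x i) \<and> (\<Sum>i\<in>A. x i - a i) \<le> t - (y - a b)}"
proof -
  have s: "(\<Sum>i\<in>A. (x(b:=y)) i - a i) = (\<Sum>i\<in>A. x i - a i)"
    using assms by (intro sum.cong) auto
  have "(\<forall>i\<in>A. a i \<le> x i) \<Longrightarrow> (\<Sum>i\<in>A. x i - a i) \<ge> 0" by (auto intro: sum_nonneg)
  moreover have "(\<forall>i\<in>A. a i \<le> (x(b:=y)) i) \<longleftrightarrow> (\<forall>i\<in>A. a i \<le> x i)" using assms by auto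
  ultimately show ?thesis using assms s by (auto simp: sum.insert_remove)
qed

lemma shifted_simplex_ind:
  fixes x a :: "'a \<Rightarrow> real" and y t :: real
  assumes "b \<notin> A" "finite A" "x \<in> space (Pi\<^sub>M A (\<lambda>_. lborel))"
  shows "indicator ({x. (\<forall>i\<in>insert b A. a i \<le> x i) \<and> (\<Sum>i\<in>insert b A. x i - a i) \<le> t}
      \<inter> space (Pi\<^sub>M (insert b A) (\<lambda>_. lborel))) (x(b := y)) =
    (indicator {a b..a b + t} y * indicator ({x. (\<forall>i\<in>A. a i \<le> x i) \<and> (\<Sum>i\<in>A. x i - a i) \<le> t - (y - a b)}
      \<inter> space (Pi\<^sub>M A (\<lambda>_. lborel))) x :: ennreal)"
proof -
  have sp: "x(b := y) \<in> space (Pi\<^sub>M (insert b A) (\<lambda>_. lborel))"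
    using assms(3) by (auto simp: space_PiM PiE_def extensional_def)
  show ?thesis
    using shifted_simplex_step[OF assms(1,2), of x y a t] sp assms(3)
    unfolding indicator_def by auto
qed

lemma emeasure_shifted_simplex:
  fixes t :: real
  assumes "finite (A :: 'a set)" "t \<ge> 0"
  shows "emeasure (Pi\<^sub>M A (\<lambda>_. lborel))
      ({x. (\<forall>i\<in>A. a i \<le> x i) \<and> (\<Sum>i\<in>A. x i - a i) \<le> t} \<inter> space (Pi\<^sub>M A (\<lambda>_. lborel)))
      = t ^ card A / fact (card A)"
  using assms(1,2)
proof (induction arbitrary: t rule: finite_induct)
  case (empty t)
  thus ?case by (simp add: PiM_empty)
next
  case (insert b A t)
  define S where "S = (\<lambda>A t. {x. (\<forall>i\<in>A. a i \<le> x i) \<and> (\<Sum>i\<in>A. x i - a i) \<le> t})"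
  define n where "n = Suc (card A)"
  have n_pos: "n > 0" by (simp add: n_def)
  let ?M = "\<lambda>A. (Pi\<^sub>M A (\<lambda>_. lborel))"
  {
    fix A :: "'a set" and t :: real assume "finite A"
    have "S A t \<inter> space (Pi\<^sub>M A (\<lambda>_. lborel)) =
            {x \<in> space (Pi\<^sub>M A (\<lambda>_. lborel)). (\<forall>i\<in>A. a i \<le> x i) \<and> (\<Sum>i\<in>A. x i - a i) \<le> t}"
      by (auto simp: S_def)
    also have "\<dots> \<in> sets (Pi\<^sub>M A (\<lambda>_. lborel))"
      using \<open>finite A\<close> by measurable
    finally have "S A t \<inter> space (Pi\<^sub>M A (\<lambda>_. lborel)) \<in> sets (Pi\<^sub>M A (\<lambda>_. lborel))" .
  } note meas [measurable] = this
  interpret product_sigma_finite "\<lambda>_. lborel"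
    by standard
  have "emeasure (?M (insert b A)) (S (insert b A) t \<inter> space (?M (insert b A))) =
        nn_integral (?M (insert b A))
          (\<lambda>x. indicator (S (insert b A) t \<inter> space (?M (insert b A))) x)"
    using insert.hyps by (subst nn_integral_indicator) auto
  also have "\<dots> = (\<integral>\<^sup>+ y. \<integral>\<^sup>+ x. indicator (S (insert b A) t \<inter> space (?M (insert b A)))
                    (x(b := y)) \<partial>?M A \<partial>lborel)"
    using insert.prems insert.hyps by (intro product_nn_integral_insert_rev) auto
  also have "\<dots> = (\<integral>\<^sup>+ y. \<integral>\<^sup>+ x. indicator {a b..a b + t} y * indicator (S A (t - (y - a b)) \<inter> space (?M A)) x
                    \<partial>?M A \<partial>lborel)"
    using insert.hyps insert.prems unfolding S_def
    by (intro nn_integral_cong shifted_simplex_ind) auto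
  also have "\<dots> = (\<integral>\<^sup>+ y. indicator {a b..a b + t} y * (\<integral>\<^sup>+ x. indicator (S A (t - (y - a b)) \<inter> space (?M A)) x
                    \<partial>?M A) \<partial>lborel)" using \<open>finite A\<close>
    by (subst nn_integral_cmult) auto
  also have "\<dots> = (\<integral>\<^sup>+ y. indicator {a b..a b + t} y * emeasure (?M A) (S A (t - (y - a b)) \<inter> space (?M A)) \<partial>lborel)"
    using \<open>finite A\<close> by (subst nn_integral_indicator) auto
  also have "\<dots> = (\<integral>\<^sup>+ y. indicator {a b..a b + t} y * (t - (y - a b)) ^ card A / ennreal (fact (card A)) \<partial>lborel)"
    using insert.IH by (intro nn_integral_cong) (auto simp: indicator_def divide_ennreal S_def)
  also have "\<dots> = (\<integral>\<^sup>+ y. indicator {a b..a b + t} y * (t - (y - a b)) ^ card A \<partial>lborel) / ennreal (fact (card A))"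
    using \<open>finite A\<close> by (subst nn_integral_divide) auto
  also have "(\<integral>\<^sup>+ y. indicator {a b..a b + t} y * (t - (y - a b)) ^ card A \<partial>lborel) =
               (\<integral>\<^sup>+y\<in>{a b..a b + t}. ennreal ((t - (y - a b)) ^ (n - 1)) \<partial>lborel)"
    by (intro nn_integral_cong) (auto simp: indicator_def n_def)
  also have "((\<lambda>x. - ((t - (x - a b)) ^ n / n)) has_real_derivative (t - (x - a b)) ^ (n - 1)) (at x)"
    if "x \<in> {a b..a b + t}" for x by (rule derivative_eq_intros refl | simp add: n_pos)+
  hence "(\<integral>\<^sup>+y\<in>{a b..a b + t}. ennreal ((t - (y - a b)) ^ (n - 1)) \<partial>lborel) =
           ennreal (-((t - (a b + t - a b)) ^ n / n) - (-((t - (a b - a b)) ^ n / n)))"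
    using insert.prems insert.hyps by (intro nn_integral_FTC_Icc) auto
  also have "\<dots> = ennreal (t ^ n / n)" using n_pos by (simp add: zero_power)
  also have "\<dots> / ennreal (fact (card A)) = ennreal (t ^ n / n / fact (card A))"
    using n_pos \<open>t \<ge> 0\<close> by (subst divide_ennreal) auto
  also have "t ^ n / n / fact (card A) = t ^ n / fact n"
    by (simp add: n_def)
  also have "n = card (insert b A)"
    using insert.hyps by (subst card.insert_remove) (auto simp: n_def)
  finally show ?case by (simp add: S_def)
qed


lemma ext_pmf:
  assumes "q \<in> simplex_param"
  shows "is_pmf (simplex_ext q :: 'x::finite \<Rightarrow> real)"
proof -
  have q: "\<forall>x\<in>UNIV - {x0::'x}. q x \<ge> 0" "(\<Sum>x\<in>UNIV - {x0::'x}. q x) \<le> 1"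
    using assms by (auto simp: simplex_param_def)
  have "(\<Sum>x\<in>UNIV. simplex_ext q x) = simplex_ext q x0 + (\<Sum>x\<in>UNIV - {x0::'x}. simplex_ext q x)"
    by (simp add: sum.remove)
  also have "(\<Sum>x\<in>UNIV - {x0::'x}. simplex_ext q x) = (\<Sum>x\<in>UNIV - {x0::'x}. q x)"
    by (intro sum.cong) (auto simp: simplex_ext_def)
  finally have "(\<Sum>x\<in>UNIV. simplex_ext q x) = 1" by (simp add: simplex_ext_def)
  moreover have "simplex_ext q x \<ge> 0" for x using q by (auto simp: simplex_ext_def)
  ultimately show ?thesis by (simp add: is_pmf_def)
qed

lemma card_J: "card (UNIV - {x0::'x::finite}) = CARD('x) - 1"
  by (simp add: card_Diff_singleton)

lemma S_eq: "(simplex_param :: ('x::finite \<Rightarrow> real) set) =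
   {x. (\<forall>i\<in>UNIV - {x0::'x}. (\<lambda>_. 0) i \<le> x i) \<and> (\<Sum>i\<in>UNIV - {x0}. x i - (\<lambda>_. 0) i) \<le> 1}
     \<inter> space (PiM (UNIV - {x0}) (\<lambda>_. lborel))"
  by (auto simp: simplex_param_def)


lemma S_emeasure: "emeasure (PiM (UNIV - {x0::'x::finite}) (\<lambda>_. lborel)) simplex_param
   = ennreal (1 / fact (CARD('x) - 1))"
  unfolding S_eq by (subst emeasure_shifted_simplex) (auto simp: card_J)

lemma S_measure: "measure (PiM (UNIV - {x0::'x::finite}) (\<lambda>_. lborel)) simplex_param
   = 1 / fact (CARD('x) - 1)"
  by (simp add: measure_def S_emeasure)

lemma int_S:
  assumes "f \<in> borel_measurable (PiM (UNIV - {x0::'x::finite}) (\<lambda>_. lborel))"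
    and "\<And>q. q \<in> simplex_param \<Longrightarrow> \<bar>f q\<bar> \<le> B"
  shows "set_integrable (PiM (UNIV - {x0::'x}) (\<lambda>_. lborel)) simplex_param (f :: _ \<Rightarrow> real)"
  unfolding set_integrable_def
proof (rule integrableI_bounded_set[where A=simplex_param and B=B])
  show "simplex_param \<in> sets (PiM (UNIV - {x0::'x}) (\<lambda>_. lborel))" by (rule S_sets)
  show "emeasure (PiM (UNIV - {x0::'x}) (\<lambda>_. lborel)) simplex_param < \<infinity>"
    by (simp add: S_emeasure)
  show "(\<lambda>x. indicator simplex_param x *\<^sub>R f x) \<in> borel_measurable (PiM (UNIV - {x0::'x}) (\<lambda>_. lborel))"
    using assms(1) by measurable
qed (use assms(2) in \<open>auto simp: indicator_def\<close>)

lemma set_integral_sum':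
  fixes f :: "'i \<Rightarrow> 'a \<Rightarrow> real"
  assumes "finite F" "\<And>i. i \<in> F \<Longrightarrow> set_integrable M A (f i)"
  shows "(LINT q:A|M. (\<Sum>i\<in>F. f i q)) = (\<Sum>i\<in>F. (LINT q:A|M. f i q))"
  using assms unfolding set_lebesgue_integral_def set_integrable_def scaleR_conv_of_real
    of_real_eq_id id_def sum_distrib_left
  by (intro Bochner_Integration.integral_sum) auto

lemma set_integrable_sum':
  fixes f :: "'i \<Rightarrow> 'a \<Rightarrow> real"
  assumes "finite F" "\<And>i. i \<in> F \<Longrightarrow> set_integrable M A (f i)"
  shows "set_integrable M A (\<lambda>q. \<Sum>i\<in>F. f i q)"
  using assms unfolding set_integrable_def scaleR_conv_of_real
    of_real_eq_id id_def sum_distrib_left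
  by (intro Bochner_Integration.integrable_sum) auto


lemma block_decomp:
  fixes f :: "nat \<Rightarrow> real"
  shows "(\<Sum>t\<in>{1..(\<Sum>j\<in>{1..<Suc k}. m j)}. f t) = (\<Sum>i\<in>{1..k}. \<Sum>t\<in>block m i. f t)"
proof (induction k)
  case 0
  then show ?case by simp
next
  case (Suc k)
  have "(\<Sum>j\<in>{1..<Suc (Suc k)}. m j) = (\<Sum>j\<in>{1..<Suc k}. m j) + m (Suc k)" by simp
  then have "(\<Sum>t\<in>{1..(\<Sum>j\<in>{1..<Suc (Suc k)}. m j)}. f t) =
      (\<Sum>t\<in>{1..(\<Sum>j\<in>{1..<Suc k}. m j)}. f t) + (\<Sum>t\<in>block m (Suc k). f t)"
    by (simp only: sum.ub_add_nat[of 1] block_def)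
  then show ?case using Suc by simp
qed

lemma block_sub:
  assumes "i \<in> {1..k}"
  shows "block m i \<subseteq> {1..(\<Sum>j\<in>{1..<Suc k}. m j)}"
proof -
  have "(\<Sum>j\<in>{1..<i}. m j) + m i = (\<Sum>j\<in>{1..<Suc i}. m j)" using assms by simp
  also have "\<dots> \<le> (\<Sum>j\<in>{1..<Suc k}. m j)" using assms by (intro sum_mono2) auto
  finally show ?thesis by (auto simp: block_def)
qed

lemma card_block: "card (block m i) = m i"
  by (simp add: block_def)

lemma block_channel:
  assumes "\<forall>t\<in>{1..n}. is_channel (W t)" "block m i \<subseteq> {1..n}" "m i > 0"
  shows "is_channel (block_avg W m i)"
proof -
  have "is_pmf (block_avg W m i x)" for x
  proof -
    have "(\<Sum>y\<in>UNIV. block_avg W m i x y) = (1 / real (m i)) * (\<Sum>t\<in>block m i. \<Sum>y\<in>UNIV. W t x y)"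
      unfolding block_avg_def sum_distrib_left[symmetric] by (subst sum.swap) simp
    also have "\<dots> = (1 / real (m i)) * (\<Sum>t\<in>block m i. 1)"
      using assms by (intro arg_cong[where f="\<lambda>z. _ * z"] sum.cong refl)
        (auto simp: is_channel_def is_pmf_def)
    also have "\<dots> = 1" using assms(3) by (simp add: card_block)
    moreover have "block_avg W m i x y \<ge> 0" for y
      unfolding block_avg_def using assms
      by (intro mult_nonneg_nonneg sum_nonneg) (auto simp: is_channel_def is_pmf_def)
    ultimately show ?thesis by (simp add: is_pmf_def)
  qed
  then show ?thesis by (simp add: is_channel_def)
qed



abbreviation MM :: "('x::finite \<Rightarrow> real) measure" where
  "MM \<equiv> PiM (UNIV - {x0}) (\<lambda>_. lborel)"

lemma S_pos: "measure (MM::('x::finite \<Rightarrow> real) measure) simplex_param > 0"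
  by (simp add: S_measure)

lemma int_const_S: "(LINT q:simplex_param|(MM::('x::finite \<Rightarrow> real) measure). c) =
    measure (MM::('x::finite \<Rightarrow> real) measure) simplex_param * c"
  by (subst set_integral_const) (auto simp: S_emeasure)

lemma step_A:
  fixes \<Phi> :: "('x::finite \<Rightarrow> real) \<Rightarrow> real" and Vb :: "'x \<Rightarrow> 'y::finite \<Rightarrow> real"
  assumes meas: "(\<lambda>q. \<Phi> (simplex_ext q)) \<in> borel_measurable MM"
    and \<Phi>b: "\<And>Q. is_pmf Q \<Longrightarrow> 0 \<le> \<Phi> Q \<and> \<Phi> Q \<le> B"
    and Vb: "is_channel Vb" and mm: "mm \<ge> 0" and eta: "\<eta> > 0" and lam: "0 < lam" "lam < 1"
    and Qh: "Qh = (\<lambda>x. (1 - lam) * ((LINT q:simplex_param|MM. exp (\<Phi> (simplex_ext q)) * simplex_ext q x)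
          / (LINT q:simplex_param|MM. exp (\<Phi> (simplex_ext q)))) + lam * unif x)"
    and small: "mm * mutual_info Qh Vb \<le> K"
    and par: "\<eta> * real CARD('x) * K \<le> lam * lam"
  shows "(LINT q:simplex_param|MM. exp (\<Phi> (simplex_ext q) + \<eta> * (mm * mutual_info (simplex_ext q) Vb)))
      \<le> (LINT q:simplex_param|MM. exp (\<Phi> (simplex_ext q))) * (1 + \<eta> * (1 + lam) * K / (1 - lam))"
proof -
  let ?S = "simplex_param :: ('x \<Rightarrow> real) set"
  let ?e = "simplex_ext :: ('x \<Rightarrow> real) \<Rightarrow> 'x \<Rightarrow> real"
  define Z where "Z = (LINT q:?S|MM. exp (\<Phi> (?e q)))"
  define Zx where "Zx = (\<lambda>x. LINT q:?S|MM. exp (\<Phi> (?e q)) * ?e q x)"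
  define P where "P = (\<lambda>x. Zx x / Z)"
  define N where "N = real CARD('x)"
  have N: "N \<ge> 1" by (simp add: N_def Suc_le_eq card_gt_0_iff)
  have pmfS: "is_pmf (?e q)" if "q \<in> ?S" for q using ext_pmf[OF that] .
  have meas_e: "(\<lambda>q. ?e q x) \<in> borel_measurable MM" for x by measurable
  have int1: "set_integrable MM ?S (\<lambda>q. exp (\<Phi> (?e q)))"
    by (rule int_S[where B="exp B"]) (use meas \<Phi>b pmfS in auto)
  have int2: "set_integrable MM ?S (\<lambda>q. exp (\<Phi> (?e q)) * ?e q x)" for x
  proof (rule int_S[where B="exp B"])
    show "(\<lambda>q. exp (\<Phi> (?e q)) * ?e q x) \<in> borel_measurable MM" using meas meas_e by measurable
    fix q assume q: "q \<in> ?S"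
    have "\<bar>exp (\<Phi> (?e q)) * ?e q x\<bar> = exp (\<Phi> (?e q)) * ?e q x"
      using pmf_nonneg[OF pmfS[OF q]] by simp
    also have "\<dots> \<le> exp B * 1"
      using \<Phi>b[OF pmfS[OF q]] pmf_nonneg[OF pmfS[OF q]] pmf_le1[OF pmfS[OF q]]
      by (intro mult_mono) auto
    finally show "\<bar>exp (\<Phi> (?e q)) * ?e q x\<bar> \<le> exp B" by simp
  qed
  have Zpos: "Z > 0"
  proof -
    have "(LINT q:?S|MM. 1) \<le> Z" unfolding Z_def
      by (rule set_integral_mono)
        (use int1 \<Phi>b pmfS in \<open>auto simp: S_emeasure intro: int_S[where B=1]\<close>)
    moreover have "(LINT q:?S|MM. (1::real)) > 0" using S_pos[where 'x='x] int_const_S[where 'x='x and c=1] by simp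
    ultimately show ?thesis by simp
  qed
  have Zx_nonneg: "Zx x \<ge> 0" for x
  proof -
    have "(LINT q:?S|MM. (0::real)) \<le> Zx x" unfolding Zx_def
    proof (rule set_integral_mono[OF _ int2])
      show "set_integrable MM ?S (\<lambda>q. 0::real)" by (simp add: set_integrable_def)
      fix q assume "q \<in> ?S"
      then show "0 \<le> exp (\<Phi> (?e q)) * ?e q x" using pmf_nonneg[OF pmfS] by simp
    qed
    then show ?thesis by simp
  qed
  have sumZx: "(\<Sum>x\<in>UNIV. Zx x) = Z"
  proof -
    have "(\<Sum>x\<in>UNIV. Zx x) = (LINT q:?S|MM. (\<Sum>x\<in>UNIV. exp (\<Phi> (?e q)) * ?e q x))"
      unfolding Zx_def by (rule set_integral_sum'[symmetric]) (use int2 in auto)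
    also have "\<dots> = Z" unfolding Z_def
      by (rule set_lebesgue_integral_cong)
        (use pmf_sum[OF pmfS] in \<open>auto simp: sum_distrib_left[symmetric]\<close>)
    finally show ?thesis .
  qed
  have P_nonneg: "P x \<ge> 0" for x using Zx_nonneg Zpos by (simp add: P_def)
  have P_sum: "(\<Sum>x\<in>UNIV. P x) = 1" using sumZx Zpos by (simp add: P_def sum_divide_distrib[symmetric])
  have Qh': "Qh = (\<lambda>x. (1 - lam) * P x + lam * unif x)" by (simp add: Qh P_def Zx_def Z_def)
  have Qh_low: "Qh x \<ge> lam / N" for x
    using P_nonneg[of x] lam by (simp add: Qh' unif_def N_def)
  have Qh_pmf: "is_pmf Qh"
  proof -
    have "(\<Sum>x\<in>UNIV. Qh x) = (1 - lam) * (\<Sum>x\<in>UNIV. P x) + lam * (\<Sum>x\<in>UNIV. unif (x::'x))"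
      by (simp add: Qh' sum.distrib sum_distrib_left)
    also have "(\<Sum>x\<in>UNIV. unif (x::'x)) = (1::real)" by (simp add: unif_def)
    finally have "(\<Sum>x\<in>UNIV. Qh x) = 1" using P_sum by simp
    moreover have "Qh x \<ge> 0" for x using Qh_low[of x] lam N by (smt (verit) divide_nonneg_pos)
    ultimately show ?thesis by (simp add: is_pmf_def)
  qed
  define Ot where "Ot = out_dist Qh Vb"
  define D where "D = (\<lambda>x. Dv Vb x Ot)"
  have Qh_pos: "Qh x > 0" for x using Qh_low[of x] lam N by (smt (verit) divide_pos_pos)
  have Ot_pos: "Ot y > 0" if "Vb x y > 0" for x y
    using out_ge[OF Qh_pmf Vb, of x y] Qh_pos[of x] that unfolding Ot_def
    by (smt (verit) mult_pos_pos)
  have Ot_pmf: "is_pmf Ot" unfolding Ot_def by (rule out_pmf[OF Qh_pmf Vb])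
  have D_nonneg: "D x \<ge> 0" for x unfolding D_def
    by (rule Dv_nonneg) (use Vb Ot_pmf Ot_pos in \<open>auto simp: is_channel_def is_pmf_def\<close>)
  have I_le: "mutual_info Q Vb \<le> (\<Sum>x\<in>UNIV. Q x * D x)" if Q: "is_pmf Q" for Q
  proof -
    have "mutual_info Q Vb \<le> Fq Q Vb Ot"
    proof (rule key[OF Q Vb])
      show "Ot y \<ge> 0" for y using Ot_pmf by (simp add: pmf_nonneg)
      show "(\<Sum>y\<in>UNIV. Ot y) \<le> 1" using Ot_pmf by (simp add: pmf_sum)
      show "Ot y > 0" if "Q x * Vb x y > 0" for x y
        using that pmf_nonneg[OF Q, of x] Ot_pos[of x y] by (auto simp: zero_less_mult_iff)
    qed
    also have "\<dots> = (\<Sum>x\<in>UNIV. Q x * D x)" by (simp add: Fq_Dv pmf_nonneg[OF Q] D_def)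
    finally show ?thesis .
  qed
  have I_Qh: "mutual_info Qh Vb = (\<Sum>x\<in>UNIV. Qh x * D x)"
    by (simp add: mi_Fq Fq_Dv pmf_nonneg[OF Qh_pmf] D_def Ot_def)
  have L_bound: "(\<Sum>x\<in>UNIV. Q x * D x) \<le> (N / lam) * (\<Sum>x\<in>UNIV. Qh x * D x)" if Q: "is_pmf Q" for Q
    unfolding sum_distrib_left
  proof (intro sum_mono)
    fix x
    have "Q x \<le> 1" by (rule pmf_le1[OF Q])
    also have "1 \<le> N / lam * Qh x" using Qh_low[of x] lam N by (simp add: field_simps)
    finally have "Q x * D x \<le> (N / lam * Qh x) * D x"
      using D_nonneg[of x] by (intro mult_right_mono)
    then show "Q x * D x \<le> N / lam * (Qh x * D x)" by (simp add: mult.assoc)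
  qed
  have mmD: "mm * (\<Sum>x\<in>UNIV. Qh x * D x) \<le> K" using small I_Qh by simp
  have y_bound: "\<eta> * (mm * mutual_info Q Vb) \<le> \<eta> * (mm * (\<Sum>x\<in>UNIV. Q x * D x))
      \<and> \<eta> * (mm * (\<Sum>x\<in>UNIV. Q x * D x)) \<le> lam" if Q: "is_pmf Q" for Q
  proof
    show "\<eta> * (mm * mutual_info Q Vb) \<le> \<eta> * (mm * (\<Sum>x\<in>UNIV. Q x * D x))"
      using I_le[OF Q] eta mm by (intro mult_left_mono) auto
    have "\<eta> * (mm * (\<Sum>x\<in>UNIV. Q x * D x)) \<le> \<eta> * (mm * ((N / lam) * (\<Sum>x\<in>UNIV. Qh x * D x)))"
      using L_bound[OF Q] eta mm by (intro mult_left_mono) auto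
    also have "\<dots> = \<eta> * (N / lam) * (mm * (\<Sum>x\<in>UNIV. Qh x * D x))" by (simp add: mult_ac)
    also have "\<dots> \<le> \<eta> * (N / lam) * K" using mmD eta lam N by (intro mult_left_mono) auto
    also have "\<dots> \<le> lam" using par lam by (simp add: N_def field_simps)
    finally show "\<eta> * (mm * (\<Sum>x\<in>UNIV. Q x * D x)) \<le> lam" .
  qed
  have y_nonneg: "0 \<le> \<eta> * (mm * mutual_info Q Vb)" if Q: "is_pmf Q" for Q
    using mi_nonneg[OF Q Vb] eta mm by simp
  define c where "c = (\<lambda>x. (1 + lam) * \<eta> * mm * D x)"
  have pw: "exp (\<Phi> (?e q) + \<eta> * (mm * mutual_info (?e q) Vb))
     \<le> exp (\<Phi> (?e q)) + (\<Sum>x\<in>UNIV. c x * (exp (\<Phi> (?e q)) * ?e q x))" if q: "q \<in> ?S" for q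
  proof -
    let ?Q = "?e q"
    define y where "y = \<eta> * (mm * mutual_info ?Q Vb)"
    have y0: "0 \<le> y" "y \<le> lam" using y_nonneg[OF pmfS[OF q]] y_bound[OF pmfS[OF q]]
      by (auto simp: y_def)
    have "exp y \<le> 1 + y + y^2" using y0 lam by (intro exp_bound) auto
    also have "y^2 \<le> lam * y" using y0 by (simp add: power2_eq_square mult_right_mono)
    finally have "exp y \<le> 1 + (1 + lam) * y" by (simp add: algebra_simps)
    also have "\<dots> \<le> 1 + (1 + lam) * (\<eta> * (mm * (\<Sum>x\<in>UNIV. ?Q x * D x)))"
      using y_bound[OF pmfS[OF q]] lam by (simp add: y_def mult_left_mono)
    finally have ey: "exp y \<le> 1 + (1 + lam) * (\<eta> * (mm * (\<Sum>x\<in>UNIV. ?Q x * D x)))" .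
    have "exp (\<Phi> ?Q + y) = exp (\<Phi> ?Q) * exp y" by (simp add: exp_add)
    also have "\<dots> \<le> exp (\<Phi> ?Q) * (1 + (1 + lam) * (\<eta> * (mm * (\<Sum>x\<in>UNIV. ?Q x * D x))))"
      using ey by (intro mult_left_mono) auto
    also have "\<dots> = exp (\<Phi> ?Q) + (\<Sum>x\<in>UNIV. c x * (exp (\<Phi> ?Q) * ?Q x))"
      by (simp add: c_def algebra_simps sum_distrib_left)
    finally show ?thesis by (simp add: y_def)
  qed
  have int3: "set_integrable MM ?S (\<lambda>q. exp (\<Phi> (?e q) + \<eta> * (mm * mutual_info (?e q) Vb)))"
  proof (rule int_S[where B="exp (B + lam)"])
    show "(\<lambda>q. exp (\<Phi> (?e q) + \<eta> * (mm * mutual_info (?e q) Vb))) \<in> borel_measurable MM"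
      using meas by measurable
    fix q assume q: "q \<in> ?S"
    have "\<Phi> (?e q) + \<eta> * (mm * mutual_info (?e q) Vb) \<le> B + lam"
      using \<Phi>b[OF pmfS[OF q]] y_bound[OF pmfS[OF q]] by linarith
    then show "\<bar>exp (\<Phi> (?e q) + \<eta> * (mm * mutual_info (?e q) Vb))\<bar> \<le> exp (B + lam)" by simp
  qed
  have int4: "set_integrable MM ?S (\<lambda>q. (\<Sum>x\<in>UNIV. c x * (exp (\<Phi> (?e q)) * ?e q x)))"
    by (intro set_integrable_sum' set_integrable_mult_right int2) auto
  have "(LINT q:?S|MM. exp (\<Phi> (?e q) + \<eta> * (mm * mutual_info (?e q) Vb)))
      \<le> (LINT q:?S|MM. exp (\<Phi> (?e q)) + (\<Sum>x\<in>UNIV. c x * (exp (\<Phi> (?e q)) * ?e q x)))"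
    by (rule set_integral_mono[OF int3 _ pw]) (intro set_integral_add int1 int4)
  also have "\<dots> = Z + (\<Sum>x\<in>UNIV. c x * Zx x)"
    using int1 int4 int2 by (simp add: set_integral_sum' Z_def Zx_def)
  also have "(\<Sum>x\<in>UNIV. c x * Zx x) = Z * ((1 + lam) * \<eta> * (mm * (\<Sum>x\<in>UNIV. P x * D x)))"
    using Zpos by (simp add: c_def P_def sum_distrib_left mult_ac)
  also have "(\<Sum>x\<in>UNIV. P x * D x) \<le> (\<Sum>x\<in>UNIV. Qh x * D x) / (1 - lam)"
    unfolding sum_divide_distrib
  proof (intro sum_mono)
    fix x
    have "(1 - lam) * P x \<le> Qh x" using lam by (simp add: Qh' unif_def)
    then have "P x \<le> Qh x / (1 - lam)" using lam by (simp add: field_simps)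
    then show "P x * D x \<le> Qh x * D x / (1 - lam)"
      using D_nonneg[of x] by (metis mult_right_mono times_divide_eq_left)
  qed
  then have "Z * ((1 + lam) * \<eta> * (mm * (\<Sum>x\<in>UNIV. P x * D x)))
      \<le> Z * ((1 + lam) * \<eta> * (mm * ((\<Sum>x\<in>UNIV. Qh x * D x) / (1 - lam))))"
    using Zpos lam eta mm by (intro mult_left_mono) auto
  also have "\<dots> = Z * ((1 + lam) * \<eta> * ((mm * (\<Sum>x\<in>UNIV. Qh x * D x)) / (1 - lam)))" by simp
  also have "\<dots> \<le> Z * ((1 + lam) * \<eta> * (K / (1 - lam)))"
    using Zpos lam eta mmD by (intro mult_left_mono divide_right_mono) auto
  finally show ?thesis by (simp add: Z_def algebra_simps)
qed


lemma concave_lower: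
  assumes Q: "is_pmf Q" and Qs: "is_pmf Qs" and W: "is_channel W" and e: "0 \<le> \<epsilon>" "\<epsilon> < 1"
    and ge: "\<And>x. Q x \<ge> (1 - \<epsilon>) * Qs x"
  shows "mutual_info Q W \<ge> (1 - \<epsilon>) * mutual_info Qs W"
proof -
  define Ot where "Ot = out_dist Q W"
  define D where "D = (\<lambda>x. Dv W x Ot)"
  have Opos: "Ot y > 0" if "Q x > 0" "W x y > 0" for x y
    using out_ge[OF Q W, of x y] that unfolding Ot_def by (smt (verit) mult_pos_pos)
  have "(1 - \<epsilon>) * mutual_info Qs W \<le> (1 - \<epsilon>) * Fq Qs W Ot"
  proof (intro mult_left_mono key[OF Qs W])
    show "Ot y \<ge> 0" for y unfolding Ot_def by (rule out_nonneg[OF Q W])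
    show "(\<Sum>y\<in>UNIV. Ot y) \<le> 1" using out_pmf[OF Q W] by (simp add: Ot_def pmf_sum)
    show "Ot y > 0" if "Qs x * W x y > 0" for x y
    proof -
      have "Qs x > 0" "W x y > 0" using that pmf_nonneg[OF Qs, of x]
        by (auto simp: zero_less_mult_iff)
      then have "Q x > 0" using ge[of x] e by (smt (verit) mult_pos_pos)
      then show ?thesis using Opos \<open>W x y > 0\<close> by auto
    qed
  qed (use e in auto)
  also have "\<dots> = (\<Sum>x\<in>UNIV. (1 - \<epsilon>) * Qs x * D x)"
    by (simp add: Fq_Dv pmf_nonneg[OF Qs] D_def sum_distrib_left mult_ac)
  also have "\<dots> \<le> (\<Sum>x\<in>UNIV. Q x * D x)"
  proof (intro sum_mono)
    fix x
    show "(1 - \<epsilon>) * Qs x * D x \<le> Q x * D x"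
    proof (cases "Q x > 0")
      case True
      have "D x \<ge> 0" unfolding D_def
        by (rule Dv_nonneg) (use W out_pmf[OF Q W] Opos[OF True] in \<open>auto simp: is_channel_def is_pmf_def Ot_def\<close>)
      then show ?thesis using ge[of x] by (intro mult_right_mono) auto
    next
      case False
      then have "Q x = 0" using pmf_nonneg[OF Q, of x] by simp
      then have "Qs x = 0" using ge[of x] e pmf_nonneg[OF Qs, of x]
        by (smt (verit) mult_pos_pos)
      then show ?thesis using \<open>Q x = 0\<close> by simp
    qed
  qed
  also have "\<dots> = mutual_info Q W" by (simp add: mi_Fq Fq_Dv pmf_nonneg[OF Q] D_def Ot_def)
  finally show ?thesis .
qed


lemma step_B:
  fixes \<Phi> :: "('x::finite \<Rightarrow> real) \<Rightarrow> real" and Wt :: "'x \<Rightarrow> 'y::finite \<Rightarrow> real"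
  assumes meas: "(\<lambda>q. \<Phi> (simplex_ext q)) \<in> borel_measurable MM"
    and \<Phi>b: "\<And>Q. is_pmf Q \<Longrightarrow> 0 \<le> \<Phi> Q \<and> \<Phi> Q \<le> B"
    and low: "\<And>Q. is_pmf Q \<Longrightarrow> c0 * mutual_info Q Wt \<le> \<Phi> Q"
    and c0: "c0 \<ge> 0" and Wt: "is_channel Wt" and Qs: "is_pmf Qs" and e: "0 < \<epsilon>" "\<epsilon> < 1"
  shows "exp (c0 * ((1 - \<epsilon>) * mutual_info Qs Wt)) * (\<epsilon> ^ (CARD('x) - 1) / fact (CARD('x) - 1))
      \<le> (LINT q:simplex_param|MM. exp (\<Phi> (simplex_ext q)))"
proof -
  let ?S = "simplex_param :: ('x \<Rightarrow> real) set"
  let ?e = "simplex_ext :: ('x \<Rightarrow> real) \<Rightarrow> 'x \<Rightarrow> real"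
  let ?J = "UNIV - {x0::'x}"
  define a where "a = (\<lambda>i::'x. (1 - \<epsilon>) * Qs i)"
  define A where "A = {x. (\<forall>i\<in>?J. a i \<le> x i) \<and> (\<Sum>i\<in>?J. x i - a i) \<le> \<epsilon>} \<inter> space (MM::('x \<Rightarrow> real) measure)"
  define E where "E = exp (c0 * ((1 - \<epsilon>) * mutual_info Qs Wt))"
  have pmfS: "is_pmf (?e q)" if "q \<in> ?S" for q using ext_pmf[OF that] .
  have A_sets: "A \<in> sets (MM::('x \<Rightarrow> real) measure)"
  proof -
    have "A = {x \<in> space (MM::('x \<Rightarrow> real) measure). (\<forall>i\<in>?J. a i \<le> x i) \<and> (\<Sum>i\<in>?J. x i - a i) \<le> \<epsilon>}"
      by (auto simp: A_def)
    also have "\<dots> \<in> sets MM" by measurable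
    finally show ?thesis .
  qed
  have A_meas: "measure MM A = \<epsilon> ^ (CARD('x) - 1) / fact (CARD('x) - 1)"
    unfolding measure_def A_def using e by (subst emeasure_shifted_simplex) (auto simp: card_J)
  have A_fin: "emeasure MM A < \<infinity>"
    unfolding A_def using e by (subst emeasure_shifted_simplex) (auto simp: card_J)
  have Qs_sum: "(\<Sum>i\<in>?J. Qs i) = 1 - Qs x0"
    using pmf_sum[OF Qs] by (simp add: sum.remove[of UNIV x0] algebra_simps)
  have AS: "A \<subseteq> ?S"
  proof
    fix q assume q: "q \<in> A"
    have "(\<Sum>i\<in>?J. q i) = (\<Sum>i\<in>?J. q i - a i) + (\<Sum>i\<in>?J. a i)"
      by (simp add: sum_subtractf)
    also have "(\<Sum>i\<in>?J. a i) = (1 - \<epsilon>) * (1 - Qs x0)"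
      by (simp add: a_def sum_distrib_left[symmetric] Qs_sum)
    finally have "(\<Sum>i\<in>?J. q i) \<le> \<epsilon> + (1 - \<epsilon>) * (1 - Qs x0)" using q by (simp add: A_def)
    also have "\<dots> \<le> 1" using e pmf_nonneg[OF Qs, of x0] mult_left_le_one_le[of "Qs x0" \<epsilon>]
      by (simp add: algebra_simps mult.commute)
    finally have s1: "(\<Sum>i\<in>?J. q i) \<le> 1" .
    have "a i \<ge> 0" for i using e pmf_nonneg[OF Qs, of i] by (simp add: a_def)
    then have "\<forall>i\<in>?J. q i \<ge> 0" using q by (auto simp: A_def intro: order.trans)
    then show "q \<in> ?S" using q s1 by (simp add: simplex_param_def A_def)
  qed
  have onA: "exp (\<Phi> (?e q)) \<ge> E" if q: "q \<in> A" for q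
  proof -
    have qS: "q \<in> ?S" using AS q by auto
    have ge: "?e q x \<ge> (1 - \<epsilon>) * Qs x" for x
    proof (cases "x = x0")
      case False
      then show ?thesis using q by (auto simp: A_def a_def simplex_ext_def)
    next
      case True
      have "(\<Sum>i\<in>?J. q i) = (\<Sum>i\<in>?J. q i - a i) + (\<Sum>i\<in>?J. a i)"
        by (simp add: sum_subtractf)
      also have "(\<Sum>i\<in>?J. a i) = (1 - \<epsilon>) * (1 - Qs x0)"
        by (simp add: a_def sum_distrib_left[symmetric] Qs_sum)
      finally have "(\<Sum>i\<in>?J. q i) \<le> \<epsilon> + (1 - \<epsilon>) * (1 - Qs x0)" using q by (simp add: A_def)
      then show ?thesis using True by (simp add: simplex_ext_def algebra_simps)
    qed
    have "c0 * ((1 - \<epsilon>) * mutual_info Qs Wt) \<le> c0 * mutual_info (?e q) Wt"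
      using concave_lower[OF pmfS[OF qS] Qs Wt _ _ ge] e c0 by (intro mult_left_mono) auto
    also have "\<dots> \<le> \<Phi> (?e q)" by (rule low[OF pmfS[OF qS]])
    finally show ?thesis by (simp add: E_def)
  qed
  have int1: "set_integrable MM ?S (\<lambda>q. exp (\<Phi> (?e q)))"
    by (rule int_S[where B="exp B"]) (use meas \<Phi>b pmfS in auto)
  have int2: "set_integrable MM ?S (\<lambda>q. indicator A q * E)"
    by (rule int_S[where B="E"]) (use A_sets in \<open>auto simp: E_def indicator_def\<close>)
  have "(LINT q:?S|MM. indicator A q * E) \<le> (LINT q:?S|MM. exp (\<Phi> (?e q)))"
    by (rule set_integral_mono[OF int2 int1]) (use onA in \<open>auto simp: indicator_def\<close>)
  moreover have "(LINT q:?S|MM. indicator A q * E) = measure MM A * E"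
  proof -
    have "(LINT q:?S|MM. indicator A q * E) = (LINT q|MM. indicator A q * E)"
      unfolding set_lebesgue_integral_def using AS
      by (intro Bochner_Integration.integral_cong) (auto simp: indicator_def)
    also have "\<dots> = (LINT q|MM. indicator A q) * E" by simp
    also have "(LINT q|MM. indicator A q) = measure MM A"
      using A_sets A_fin by (simp add: integral_indicator)
    finally show ?thesis .
  qed
  ultimately show ?thesis using A_meas by (simp add: E_def mult.commute)
qed



lemma cube_powr: "x \<ge> 0 \<Longrightarrow> (x powr (1/3)) ^ 3 = (x::real)"
  by (cases "x = 0") (simp_all add: powr_power)

lemma powr_cube: "y \<ge> 0 \<Longrightarrow> (y ^ 3) powr (1/3) = (y::real)"
proof -
  assume y: "y \<ge> 0"
  have "(y ^ 3) powr (1/3) \<ge> 0" by simp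
  moreover have "((y ^ 3) powr (1/3)) ^ 3 = y ^ 3" using y by (simp add: cube_powr)
  ultimately show ?thesis using y by (metis power_eq_iff_eq_base zero_less_numeral)
qed

lemma Lam_eq:
  fixes a b c e :: real
  assumes "a \<ge> 0" "b \<ge> 0" "c \<ge> 0" "e \<ge> 0"
  shows "a powr (2/3) * b powr (2/3) * c powr (1/3) * e powr (1/3) = (a^2 * b^2 * c * e) powr (1/3)"
proof -
  have sq: "z powr (2/3) = (z^2) powr (1/3)" if "z \<ge> 0" for z :: real
  proof -
    have "z powr (real 2) = z^2" using that by (rule powr_realpow') simp
    then have "z^2 = z powr 2" by simp
    then show ?thesis by (simp add: powr_powr)
  qed
  have "a powr (2/3) = (a^2) powr (1/3)" using assms(1) by (rule sq)
  moreover have "b powr (2/3) = (b^2) powr (1/3)" using assms(2) by (rule sq)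
  ultimately show ?thesis using assms by (simp add: powr_mult)
qed


lemma lin_helper:
  fixes a b c e f g h p :: real
  assumes "a - b - c - 2 * e \<le> p" "e \<le> c" "p = h + f" "f \<le> c / 2" "b \<le> g" "g \<le> f / 2"
  shows "a \<le> h + 15 / 4 * c"
  using assms by linarith

lemma final_arith:
  fixes I Imax K N n L lam \<eta> B :: real
  assumes I: "0 \<le> I" "I \<le> Imax" and Im: "Imax > 0" and K: "K \<ge> 2 * Imax" and N: "N \<ge> 2"
    and n: "n \<ge> 3" and L: "L \<ge> 1" and lam: "0 < lam" "lam < 1"
    and lam3: "lam ^ 3 = K * N * (N - 1) / Imax * (L / n)"
    and eta: "\<eta> = sqrt ((N - 1) / (K * N * Imax) * (lam * L / n))"
    and main: "\<eta> * n * ((1 - 1 / n) * I) - (N - 1) * L \<le> (B + 1) * (\<eta> * (1 + lam) * K / (1 - lam))"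
  shows "I \<le> K * B / n + 4 * Imax powr (2/3) * N powr (2/3) * K powr (1/3) * (L / n) powr (1/3)"
proof -
  define d where "d = N - 1"
  have d: "d \<ge> 1" using N by (simp add: d_def)
  have Kp: "K > 0" using K Im by simp
  have np: "n > 0" using n by simp
  have eta2: "\<eta>^2 = d / (K * N * Imax) * (lam * L / n)"
    unfolding eta d_def using d Kp N Im lam L np by (subst real_sqrt_pow2) (auto simp: d_def)
  have etap: "\<eta> > 0" unfolding eta using d Kp N Im lam L np by (auto simp: d_def)
  have lam3': "lam ^ 3 = K * N * d * L / (Imax * n)" using lam3 by (simp add: d_def)
  have key1: "d * L / (\<eta> * n) = lam * Imax"
  proof -
    have "(d * L / (\<eta> * n))^2 = d^2 * L^2 / (\<eta>^2 * n^2)" by (simp add: power_divide power_mult_distrib)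
    also have "\<dots> = d * L * K * N * Imax / (lam * n)"
      unfolding eta2 using d Kp N Im lam L np by (simp add: field_simps power2_eq_square)
    also have "\<dots> = (lam * Imax)^2"
    proof -
      have "K * N * d * L = lam^3 * Imax * n" using lam3' Im np by (simp add: field_simps)
      then show ?thesis using lam np by (simp add: field_simps power2_eq_square power3_eq_cube)
    qed
    finally show ?thesis using d L etap np lam Im
      by (subst (asm) power2_eq_iff_nonneg) auto
  qed
  define X where "X = (1 - 1 / n) * I - lam * Imax"
  have "X \<le> (B + 1) * (K / n) * ((1 + lam) / (1 - lam))"
  proof -
    have "\<eta> * n * X = \<eta> * n * ((1 - 1 / n) * I) - \<eta> * n * (lam * Imax)" by (simp add: X_def algebra_simps)
    also have "\<eta> * n * (lam * Imax) = d * L" using key1 etap np by (simp add: field_simps)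
    finally have "\<eta> * n * X \<le> (B + 1) * (\<eta> * (1 + lam) * K / (1 - lam))" using main by (simp add: d_def)
    also have "\<dots> = \<eta> * n * ((B + 1) * (K / n) * ((1 + lam) / (1 - lam)))" using np lam by (simp add: field_simps)
    finally have h: "\<eta> * n * X \<le> \<eta> * n * ((B + 1) * (K / n) * ((1 + lam) / (1 - lam)))" .
    have "\<eta> * n > 0" using etap np by simp
    then show ?thesis using h mult_le_cancel_left_pos by blast
  qed
  then have "X * ((1 - lam) / (1 + lam)) \<le> (B + 1) * (K / n) * ((1 + lam) / (1 - lam)) * ((1 - lam) / (1 + lam))"
    using lam by (intro mult_right_mono) auto
  also have "\<dots> = (B + 1) * (K / n)"
  proof -
    have one: "((1 + lam) / (1 - lam)) * ((1 - lam) / (1 + lam)) = 1" using lam by simp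
    show ?thesis by (simp only: mult.assoc one)
  qed
  finally have "X * ((1 - lam) / (1 + lam)) \<le> (B + 1) * (K / n)" .
  moreover have "X - 2 * lam * I \<le> X * ((1 - lam) / (1 + lam))"
  proof -
    have XI: "X \<le> I" using I lam Im np by (simp add: X_def algebra_simps)
    have e1: "X * (1 - lam) - (X - 2 * lam * I) * (1 + lam) = 2 * lam * ((1 + lam) * I - X)"
      by (simp add: algebra_simps)
    have "(1 + lam) * I = I + lam * I" by (simp add: algebra_simps)
    moreover have "lam * I \<ge> 0" using lam I by simp
    ultimately have "(1 + lam) * I - X \<ge> 0" using XI by linarith
    then have "2 * lam * ((1 + lam) * I - X) \<ge> 0" using lam by simp
    then have "(X - 2 * lam * I) * (1 + lam) \<le> X * (1 - lam)" using e1 by linarith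
    then show ?thesis using lam by (simp add: field_simps)
  qed
  ultimately have s1: "X - 2 * lam * I \<le> (B + 1) * (K / n)" by linarith
  have Kn: "K / n \<le> lam * Imax / 2"
  proof -
    have "K / n = lam ^ 3 * Imax / (N * d * L)" using lam3' Im np N d L by (simp add: field_simps)
    also have "\<dots> \<le> lam * Imax / (N * d * L)"
    proof -
      have "lam ^ 3 \<le> lam" using lam by (simp add: power3_eq_cube) (smt (verit) mult_le_one mult_nonneg_nonneg mult_left_le_one_le)
      then show ?thesis using Im N d L by (intro divide_right_mono mult_right_mono) auto
    qed
    also have "\<dots> \<le> lam * Imax / 2"
    proof -
      have "N * d * L \<ge> 2 * 1 * 1" using N d L by (intro mult_mono) auto
      then show ?thesis using lam Im by (intro divide_left_mono) auto
    qed
    finally show ?thesis .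
  qed
  have Iml: "I / n \<le> Imax / n" using I np by (simp add: divide_right_mono)
  have "Imax / n \<le> K / n / 2" using K np by (simp add: field_simps)
  have main2: "I \<le> K * B / n + 15 / 4 * (lam * Imax)"
  proof (rule lin_helper)
    show "I - I / n - lam * Imax - 2 * (lam * I) \<le> (B + 1) * (K / n)" using s1 by (simp add: X_def algebra_simps)
    show "lam * I \<le> lam * Imax" using I lam by simp
    show "(B + 1) * (K / n) = K * B / n + K / n" using np by (simp add: field_simps)
    show "K / n \<le> lam * Imax / 2" by (rule Kn)
    show "I / n \<le> Imax / n" by (rule Iml)
    show "Imax / n \<le> K / n / 2" by fact
  qed
  define V where "V = Imax^2 * N^2 * K * (L / n)"
  have Lam: "Imax powr (2/3) * N powr (2/3) * K powr (1/3) * (L / n) powr (1/3) = V powr (1/3)"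
    unfolding V_def using Im N Kp L np by (intro Lam_eq) auto
  have "(lam * Imax) ^ 3 \<le> V"
  proof -
    have "(lam * Imax) ^ 3 = lam ^ 3 * Imax ^ 3" by (simp add: power_mult_distrib)
    also have "\<dots> = K * N * d * (L / n) * Imax^2" using lam3' Im by (simp add: field_simps power3_eq_cube power2_eq_square)
    also have "\<dots> \<le> K * N * N * (L / n) * Imax^2"
      using Kp N L np d by (intro mult_right_mono mult_left_mono) (auto simp: d_def)
    finally show ?thesis by (simp add: V_def power2_eq_square mult_ac)
  qed
  then have "lam * Imax \<le> V powr (1/3)"
    using powr_mono2[of "1/3" "(lam * Imax)^3" V] lam Im by (simp add: powr_cube)
  moreover have "lam * Imax > 0" using lam Im by simp
  ultimately have "15 / 4 * (lam * Imax) \<le> 4 * V powr (1/3)" by linarith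
  then show ?thesis using main2 Lam by (simp add: mult.assoc)
qed

lemma trivial_arith:
  fixes Imax K N n L :: real
  assumes Im: "Imax > 0" and K: "K > 0" and N: "N \<ge> 2" and n: "n > 0" and L: "L \<ge> 0"
    and big: "\<not> (K * N * (N - 1) / Imax * (L / n)) powr (1/3) < 1"
  shows "Imax \<le> 4 * Imax powr (2/3) * N powr (2/3) * K powr (1/3) * (L / n) powr (1/3)"
proof -
  define b where "b = K * N * (N - 1) / Imax * (L / n)"
  have b0: "b \<ge> 0" unfolding b_def using Im K N n L by simp
  have b1: "b \<ge> 1"
  proof -
    have "1 \<le> (b powr (1/3))^3" using big by (simp add: b_def)
    then show ?thesis using cube_powr[OF b0] by simp
  qed
  define V where "V = Imax^2 * N^2 * K * (L / n)"
  have N1: "N - 1 \<noteq> 0" using N by simp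
  have V: "V = Imax^3 * (N / (N - 1)) * b" unfolding V_def b_def using Im N1 n
    by (simp add: field_simps power2_eq_square power3_eq_cube)
  have "Imax^3 \<le> V"
  proof -
    have "1 \<le> N / (N - 1)" using N by simp
    moreover have "1 \<le> b" by (rule b1)
    ultimately have "1 \<le> (N / (N - 1)) * b" by (metis mult_mono' mult_1 zero_le_one order.trans)
    then have "Imax^3 * 1 \<le> Imax^3 * ((N / (N - 1)) * b)" using Im by (intro mult_left_mono) auto
    then show ?thesis by (simp add: V mult.assoc)
  qed
  then have "Imax \<le> V powr (1/3)"
    using powr_mono2[of "1/3" "Imax^3" V] Im by (simp add: powr_cube)
  also have "V powr (1/3) = Imax powr (2/3) * N powr (2/3) * K powr (1/3) * (L / n) powr (1/3)"
    unfolding V_def using Im N K n L by (intro Lam_eq[symmetric]) auto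
  finally have "Imax \<le> Imax powr (2/3) * N powr (2/3) * K powr (1/3) * (L / n) powr (1/3)" .
  moreover have "Imax powr (2/3) * N powr (2/3) * K powr (1/3) * (L / n) powr (1/3) \<ge> 0" by simp
  ultimately show ?thesis by linarith
qed


theorem lemma5:
  fixes W :: "nat \<Rightarrow> 'x::finite \<Rightarrow> 'y::finite \<Rightarrow> real"
    and m :: "nat \<Rightarrow> nat" and n B :: nat and K lam :: real
  defines "Imax \<equiv> log 2 (real (min CARD('x) CARD('y)))"
  defines "lam_star \<equiv> (K * real CARD('x) * (real CARD('x) - 1) / Imax * (ln (real n) / real n)) powr (1/3)"
  defines "\<eta> \<equiv> sqrt ((real CARD('x) - 1) / (K * real CARD('x) * Imax) * (lam * ln (real n) / real n))"
  assumes card_X: "CARD('x) \<ge> 2"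
    and n_ge: "n \<ge> 3"
    and K_ge: "K \<ge> 2 * Imax"
    and chan: "\<forall>t\<in>{1..n}. is_channel (W t)"
    and m_pos: "\<forall>i\<in>{1..B+1}. m i > 0"
    and m_sum: "(\<Sum>i\<in>{1..B+1}. m i) = n"
    and lam_star_case: "lam_star < 1 \<longrightarrow> lam = lam_star"
    and lam_range: "0 < lam" "lam < 1"
    and small: "\<forall>i\<in>{1..B+1}. real (m i) * mutual_info (Qhat lam \<eta> W m i) (block_avg W m i) \<le> K"
  shows "K * real B / real n \<ge> capacity (total_avg W n)
           - 4 * Imax powr (2/3) * real CARD('x) powr (2/3) * K powr (1/3)
               * (ln (real n) / real n) powr (1/3)"
proof -
  define N where "N = real CARD('x)"
  define L where "L = ln (real n)"
  define Lam where "Lam = 4 * Imax powr (2/3) * real CARD('x) powr (2/3) * K powr (1/3)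
               * (ln (real n) / real n) powr (1/3)"
  have N2: "N \<ge> 2" using card_X by (simp add: N_def)
  have min1: "real (min CARD('x) CARD('y)) \<ge> 1"
    by (simp add: min_def Suc_le_eq card_gt_0_iff)
  have Imax_ge0: "Imax \<ge> 0" unfolding Imax_def using min1 by simp
  have Imax_pos: "Imax > 0"
  proof (rule ccontr)
    assume "\<not> Imax > 0"
    then have "Imax = 0" using Imax_ge0 by simp
    then have "lam_star = 0" by (simp add: lam_star_def)
    then have "lam = 0" using lam_star_case by simp
    with lam_range show False by simp
  qed
  have Kpos: "K > 0" using K_ge Imax_pos by simp
  have npos: "real n > 0" using n_ge by simp
  have L1: "L \<ge> 1"
  proof -
    have "exp 1 \<le> real n" using exp_le n_ge by simp
    then have "ln (exp 1) \<le> ln (real n)" using npos by (subst ln_le_cancel_iff) auto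
    then show ?thesis by (simp add: L_def)
  qed
  have sum_n: "(\<Sum>j\<in>{1..<Suc (B+1)}. m j) = n" using m_sum by (simp add: atLeastLessThanSuc_atLeastAtMost)
  have chan_j: "is_channel (block_avg W m j)" if j: "j \<in> {1..B+1}" for j
    using block_channel[OF chan _ ] block_sub[OF j, of m] sum_n m_pos j by auto
  have tot_eq: "total_avg W n = block_avg W (\<lambda>_. n) 1"
    by (simp add: total_avg_def block_avg_def block_def)
  have chanbar: "is_channel (total_avg W n)"
    unfolding tot_eq by (rule block_channel[OF chan]) (use npos in \<open>auto simp: block_def\<close>)
  have Wbar_mix: "total_avg W n = (\<lambda>x y. \<Sum>j\<in>{1..B+1}. (real (m j) / real n) * block_avg W m j x y)"
  proof (intro ext)
    fix x y
    have "total_avg W n x y = (1 / real n) * (\<Sum>t\<in>{1..(\<Sum>j\<in>{1..<Suc (B+1)}. m j)}. W t x y)"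
      by (simp only: total_avg_def sum_n)
    also have "\<dots> = (1 / real n) * (\<Sum>j\<in>{1..B+1}. \<Sum>t\<in>block m j. W t x y)"
      by (simp only: block_decomp)
    also have "\<dots> = (\<Sum>j\<in>{1..B+1}. (1 / real n) * (\<Sum>t\<in>block m j. W t x y))"
      by (rule sum_distrib_left)
    also have "\<dots> = (\<Sum>j\<in>{1..B+1}. (real (m j) / real n) * block_avg W m j x y)"
    proof (intro sum.cong refl)
      fix j assume "j \<in> {1..B+1}"
      then have "real (m j) > 0" using m_pos by auto
      then show "1 / real n * (\<Sum>t\<in>block m j. W t x y) = real (m j) / real n * block_avg W m j x y"
        unfolding block_avg_def by simp
    qed
    finally show "total_avg W n x y = (\<Sum>j\<in>{1..B+1}. (real (m j) / real n) * block_avg W m j x y)" .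
  qed
  have bound: "mutual_info Qs (total_avg W n) \<le> K * real B / real n + Lam" if Qs: "is_pmf Qs" for Qs
  proof (cases "lam_star < 1")
    case False
    have "mutual_info Qs (total_avg W n) \<le> Imax"
      unfolding Imax_def by (rule mi_le_min[OF Qs chanbar])
    also have "Imax \<le> Lam" unfolding Lam_def
      by (rule trivial_arith) (use Imax_pos Kpos N2 npos L1 False in \<open>auto simp: N_def L_def lam_star_def\<close>)
    also have "Lam \<le> K * real B / real n + Lam" using Kpos npos by simp
    finally show ?thesis .
  next
    case True
    then have lam_eq: "lam = lam_star" using lam_star_case by simp
    define base where "base = K * N * (N - 1) / Imax * (L / real n)"
    have base0: "base \<ge> 0" unfolding base_def using Kpos N2 Imax_pos npos L1 by simp
    have lam3: "lam ^ 3 = K * N * (N - 1) / Imax * (L / real n)"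
      using cube_powr[OF base0] lam_eq by (simp add: lam_star_def base_def N_def L_def)
    have eta_def': "\<eta> = sqrt ((N - 1) / (K * N * Imax) * (lam * L / real n))"
      by (simp add: \<eta>_def N_def L_def)
    have eta_arg: "(N - 1) / (K * N * Imax) * (lam * L / real n) \<ge> 0"
      using N2 Kpos Imax_pos lam_range L1 npos by simp
    have eta_pos: "\<eta> > 0" unfolding eta_def'
      using N2 Kpos Imax_pos lam_range L1 npos by simp
    have eta2: "\<eta>^2 = (N - 1) / (K * N * Imax) * (lam * L / real n)"
      unfolding eta_def' using eta_arg by simp
    have par: "\<eta> * real CARD('x) * K \<le> lam * lam"
    proof -
      have "(\<eta> * N * K)^2 = \<eta>^2 * N^2 * K^2" by (simp add: power_mult_distrib)
      also have "\<dots> = lam * (K * N * (N - 1) / Imax * (L / real n))"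
        unfolding eta2 using Kpos N2 Imax_pos npos by (simp add: field_simps power2_eq_square)
      also have "\<dots> = (lam * lam)^2" unfolding lam3[symmetric] by (simp add: power2_eq_square power3_eq_cube)
      finally have sq: "(\<eta> * N * K)^2 = (lam * lam)^2" .
      have h1: "0 \<le> \<eta> * N * K" using eta_pos N2 Kpos by simp
      have h2: "0 \<le> lam * lam" using lam_range by simp
      have "\<eta> * N * K = lam * lam" by (rule iffD1[OF power2_eq_iff_nonneg[OF h1 h2] sq])
      then have "\<eta> * N * K \<le> lam * lam" by simp
      then show ?thesis by (simp add: N_def)
    qed
    define c1 where "c1 = \<eta> * (1 + lam) * K / (1 - lam)"
    have c1_pos: "c1 \<ge> 0" unfolding c1_def using eta_pos lam_range Kpos by simp
    define Z where "Z = (\<lambda>i. simplex_integral (\<lambda>Q. exp (potential \<eta> W m i Q :: real)))"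
    have pot_meas: "(\<lambda>q. potential \<eta> W m i (simplex_ext q)) \<in> borel_measurable MM" for i
      unfolding potential_def by measurable
    define PB where "PB = (\<lambda>i. \<eta> * (\<Sum>j\<in>{1..<i}. real (m j) * log 2 (real CARD('x))))"
    have pot_bounds: "0 \<le> potential \<eta> W m i Q \<and> potential \<eta> W m i Q \<le> PB i"
      if i: "i \<le> B + 2" and Q: "is_pmf Q" for i Q
    proof -
      have jc: "is_channel (block_avg W m j)" if "j \<in> {1..<i}" for j
        using chan_j that i by auto
      have "0 \<le> (\<Sum>j\<in>{1..<i}. real (m j) * mutual_info Q (block_avg W m j))"
        using mi_nonneg[OF Q jc] by (intro sum_nonneg) simp
      moreover have "(\<Sum>j\<in>{1..<i}. real (m j) * mutual_info Q (block_avg W m j))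
          \<le> (\<Sum>j\<in>{1..<i}. real (m j) * log 2 (real CARD('x)))"
        using mi_le_X[OF Q jc] by (intro sum_mono mult_left_mono) auto
      ultimately show ?thesis using eta_pos by (simp add: potential_def PB_def mult_left_mono)
    qed
    have pot_Suc: "potential \<eta> W m (Suc i) Q = potential \<eta> W m i Q + \<eta> * (real (m i) * mutual_info Q (block_avg W m i))"
      if "1 \<le> i" for i Q
      using that by (simp add: potential_def sum.atLeastLessThan_Suc algebra_simps)
    have stepA_i: "Z (Suc i) \<le> Z i * (1 + c1)" if i: "i \<in> {1..B+1}" for i
    proof -
      have "Z (Suc i) = (LINT q:simplex_param|MM. exp (potential \<eta> W m i (simplex_ext q)
            + \<eta> * (real (m i) * mutual_info (simplex_ext q) (block_avg W m i))))"
        using i by (simp add: Z_def simplex_integral_def pot_Suc)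
      also have "\<dots> \<le> (LINT q:simplex_param|MM. exp (potential \<eta> W m i (simplex_ext q))) * (1 + \<eta> * (1 + lam) * K / (1 - lam))"
      proof (rule step_A[where B = "PB i" and Qh = "Qhat lam \<eta> W m i"])
        show "(\<lambda>q. potential \<eta> W m i (simplex_ext q)) \<in> borel_measurable MM" by (rule pot_meas)
        show "\<And>Q. is_pmf Q \<Longrightarrow> 0 \<le> potential \<eta> W m i Q \<and> potential \<eta> W m i Q \<le> PB i"
          using pot_bounds i by auto
        show "is_channel (block_avg W m i)" by (rule chan_j[OF i])
        show "Qhat lam \<eta> W m i = (\<lambda>x. (1 - lam) * ((LINT q:simplex_param|MM. exp (potential \<eta> W m i (simplex_ext q)) * simplex_ext q x)
          / (LINT q:simplex_param|MM. exp (potential \<eta> W m i (simplex_ext q)))) + lam * unif x)"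
          by (simp add: Qhat_def simplex_integral_def)
        show "real (m i) * mutual_info (Qhat lam \<eta> W m i) (block_avg W m i) \<le> K"
          using small i by auto
      qed (use eta_pos lam_range par in auto)
      finally show ?thesis by (simp add: Z_def simplex_integral_def c1_def)
    qed
    have Z1: "Z 1 = 1 / fact (CARD('x) - 1)"
      by (simp add: Z_def simplex_integral_def potential_def int_const_S S_measure)
    have iter: "Z (Suc k) \<le> Z 1 * (1 + c1) ^ k" if "k \<le> B + 1" for k
      using that
    proof (induction k)
      case 0 then show ?case by simp
    next
      case (Suc k)
      have "Z (Suc (Suc k)) \<le> Z (Suc k) * (1 + c1)" using stepA_i[of "Suc k"] Suc.prems by auto
      also have "\<dots> \<le> Z 1 * (1 + c1) ^ k * (1 + c1)"
        using Suc c1_pos by (intro mult_right_mono) auto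
      finally show ?case by (simp add: mult_ac)
    qed
    define Is where "Is = mutual_info Qs (total_avg W n)"
    define d where "d = CARD('x) - 1"
    have stepB: "exp ((\<eta> * real n) * ((1 - 1 / real n) * Is)) * ((1 / real n) ^ d / fact d) \<le> Z (B + 2)"
    proof -
      have "exp ((\<eta> * real n) * ((1 - 1 / real n) * mutual_info Qs (total_avg W n)))
          * ((1 / real n) ^ (CARD('x) - 1) / fact (CARD('x) - 1))
          \<le> (LINT q:simplex_param|MM. exp (potential \<eta> W m (B + 2) (simplex_ext q)))"
      proof (rule step_B[where B = "PB (B + 2)"])
        show "(\<lambda>q. potential \<eta> W m (B + 2) (simplex_ext q)) \<in> borel_measurable MM" by (rule pot_meas)
        show "\<And>Q. is_pmf Q \<Longrightarrow> 0 \<le> potential \<eta> W m (B + 2) Q \<and> potential \<eta> W m (B + 2) Q \<le> PB (B + 2)"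
          using pot_bounds by auto
        show "\<eta> * real n * mutual_info Q (total_avg W n) \<le> potential \<eta> W m (B + 2) Q"
          if Q: "is_pmf Q" for Q
        proof -
          have "mutual_info Q (total_avg W n) \<le> (\<Sum>j\<in>{1..B+1}. (real (m j) / real n) * mutual_info Q (block_avg W m j))"
            unfolding Wbar_mix by (rule mi_convex[OF Q]) (use chan_j in auto)
          then have "\<eta> * real n * mutual_info Q (total_avg W n)
              \<le> \<eta> * real n * (\<Sum>j\<in>{1..B+1}. (real (m j) / real n) * mutual_info Q (block_avg W m j))"
            using eta_pos npos by (intro mult_left_mono) auto
          also have "\<dots> = \<eta> * (\<Sum>j\<in>{1..B+1}. real n * ((real (m j) / real n) * mutual_info Q (block_avg W m j)))"
            by (simp only: sum_distrib_left mult.assoc)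
          also have "\<dots> = \<eta> * (\<Sum>j\<in>{1..B+1}. real (m j) * mutual_info Q (block_avg W m j))"
            using npos by (intro arg_cong[where f="\<lambda>z. \<eta> * z"] sum.cong refl) simp
          also have "{1..B+1} = {1..<B+2}" by auto
          finally show ?thesis by (simp add: potential_def)
        qed
      qed (use eta_pos npos chanbar Qs n_ge in auto)
      then show ?thesis by (simp add: Z_def simplex_integral_def Is_def d_def)
    qed
    have "exp ((\<eta> * real n) * ((1 - 1 / real n) * Is)) * (1 / real n) ^ d \<le> (1 + c1) ^ (B + 1)"
    proof -
      have "exp ((\<eta> * real n) * ((1 - 1 / real n) * Is)) * ((1 / real n) ^ d / fact d)
          \<le> 1 / fact d * (1 + c1) ^ (B + 1)"
        using stepB iter[of "B + 1"] Z1 by (simp add: d_def)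
      then show ?thesis by (simp add: field_simps)
    qed
    also have "(1 + c1) ^ (B + 1) \<le> exp c1 ^ (B + 1)"
      using c1_pos by (intro power_mono) auto
    also have "\<dots> = exp (real (B + 1) * c1)" by (simp only: exp_of_nat_mult)
    also have "(1 / real n) ^ d = exp (- real d * L)"
    proof -
      have "1 / real n = exp (- L)" using npos by (simp add: L_def exp_minus inverse_eq_divide)
      then show ?thesis by (simp add: exp_of_nat_mult[symmetric])
    qed
    finally have "exp ((\<eta> * real n) * ((1 - 1 / real n) * Is) - real d * L) \<le> exp (real (B + 1) * c1)"
      by (simp add: exp_add[symmetric])
    then have main: "\<eta> * real n * ((1 - 1 / real n) * Is) - (N - 1) * L \<le> (real B + 1) * (\<eta> * (1 + lam) * K / (1 - lam))"
      using card_X by (simp add: c1_def d_def N_def of_nat_diff add.commute)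
    have "Is \<le> K * real B / real n + 4 * Imax powr (2/3) * N powr (2/3) * K powr (1/3) * (L / real n) powr (1/3)"
    proof (rule final_arith[where lam = lam and \<eta> = \<eta>])
      show "0 \<le> Is" unfolding Is_def by (rule mi_nonneg[OF Qs chanbar])
      show "Is \<le> Imax" unfolding Is_def Imax_def by (rule mi_le_min[OF Qs chanbar])
      show "lam ^ 3 = K * N * (N - 1) / Imax * (L / real n)" by (rule lam3)
      show "\<eta> = sqrt ((N - 1) / (K * N * Imax) * (lam * L / real n))" by (rule eta_def')
    qed (use Imax_pos K_ge N2 n_ge L1 lam_range main in auto)
    then show ?thesis by (simp add: Lam_def Is_def N_def L_def)
  qed
  have "capacity (total_avg W n) \<le> K * real B / real n + Lam"
    unfolding capacity_def
  proof (rule cSUP_least)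
    have "is_pmf (unif :: 'x \<Rightarrow> real)" by (simp add: is_pmf_def unif_def)
    then show "prob_simplex \<noteq> ({} :: ('x \<Rightarrow> real) set)" by (auto simp: prob_simplex_def)
  qed (use bound in \<open>auto simp: prob_simplex_def\<close>)
  then show ?thesis by (simp add: Lam_def)
qed


end
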